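(* Let $C\subset\mathbb R^3$ be a non-closed embedded curve of length $l>0$ with nowhere vanishing curvature and orientation-compatible arc-length parametrization $\mathbf c:[-l/2,l/2]\to\mathbb R^3$, and suppose $C$ does not lie in any plane. Let $F\in\mathcal D_*(C)$ be a normal form with $F(s,0)=\mathbf c(s)$. Then $F(\Omega_\epsilon)$ is congruent to $F_*(\Omega_\epsilon)$ for sufficiently small $\epsilon>0$ if and only if $C$ has a positive symmetry.
   Context: $-C$ is $C$ with the opposite orientation; $\kappa$ is the curvature of $\mathbf c$; $\Omega_\epsilon=[-l/2,l/2]\times(-\epsilon,\epsilon)$. "$F(\Omega_\epsilon)$ congruent to $G(\Omega_\epsilon)$ for sufficiently small $\epsilon$" means there exist an isometry $T$ of $\mathbb R^3$ and $\epsilon_0>0$ with $T(F(\Omega_\epsilon))=G(\Omega_\epsilon)$ for all $0<\epsilon<\epsilon_0$. A developable strip along $C$ is the germ of a $C^\infty$ embedding $f(u,v)=f(u,0)+v\,\xi_f(u)$ with $\mathbf c_f(u)=f(u,0)$ parametrizing $C$, $\xi_f$ unit, and zero Gaussian curvature; with the Frenet frame $(\mathbf e,\mathbf n,\mathbf b)$ of $\mathbf c_f$ write $\xi_f=\cos\beta_f\,\mathbf e+\sin\beta_f(\cos\alpha_f\,\mathbf n+\sin\alpha_f\,\mathbf b)$. $\mathcal D(C)$: strips with $\mathbf c_f$ inducing the orientation of $C$ and $0<|\cos\alpha_f|<1$, normalized by $0<|\alpha_f|<\pi/2$ (first angular function), $0<\beta_f<\pi$. Geodesic curvature $\mu_f=\kappa_f\cos\alpha_f$;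 admissible ($\in\mathcal D_*(C)$) if $\mu_f<\min\kappa_f$ everywhere. A normal form is such a strip $F(s,v)$ defined near $[-l/2,l/2]\times\{0\}$ with $s\mapsto F(s,0)$ an arc-length parametrization of $C$ (either orientation); it is determined by that parametrization and its first angular function. Inverse: $F_*\in\mathcal D_*(-C)$ is the normal form with $F_*(s,0)=\mathbf c(-s)$ whose first angular function (w.r.t. the Frenet frame of $s\mapsto\mathbf c(-s)$) has the same sign as $\alpha_F(s)$ and satisfies $\kappa(-s)\cos\alpha_{F_*}(s)=\kappa(s)\cos\alpha_F(s)$. A positive symmetry of $C$ is an orientation-preserving isometry $T\ne\mathrm{id}$ of $\mathbb R^3$ with $T(C)=C$. *)

theory Defs
  imports "HOL-Analysis.Analysis"
begin

unbundle no cross3_syntax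
unbundle set_product_syntax

(* Derivative of a curve (total function real => vector; only its values near the
   parameter interval matter). *)
definition vd :: "(real \<Rightarrow> 'a::real_normed_vector) \<Rightarrow> real \<Rightarrow> 'a" where
  "vd \<gamma> = (\<lambda>s. vector_derivative \<gamma> (at s))"

definition smooth_curve_on :: "real set \<Rightarrow> (real \<Rightarrow> real^3) \<Rightarrow> bool" where
  "smooth_curve_on U \<gamma> \<longleftrightarrow> (\<forall>k. \<forall>s\<in>U. ((vd ^^ k) \<gamma>) differentiable (at s))"

definition curvature :: "(real \<Rightarrow> real^3) \<Rightarrow> real \<Rightarrow> real" where
  "curvature \<gamma> s = norm (vd (vd \<gamma>) s)"

definition frenet_e :: "(real \<Rightarrow> real^3) \<Rightarrow> real \<Rightarrow> real^3" where
  "frenet_e \<gamma> s = vd \<gamma> s"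

definition frenet_n :: "(real \<Rightarrow> real^3) \<Rightarrow> real \<Rightarrow> real^3" where
  "frenet_n \<gamma> s = (1 / curvature \<gamma> s) *\<^sub>R vd (vd \<gamma>) s"

definition frenet_b :: "(real \<Rightarrow> real^3) \<Rightarrow> real \<Rightarrow> real^3" where
  "frenet_b \<gamma> s = cross3 (frenet_e \<gamma> s) (frenet_n \<gamma> s)"

definition ruling :: "(real \<Rightarrow> real^3) \<Rightarrow> (real \<Rightarrow> real) \<Rightarrow> (real \<Rightarrow> real) \<Rightarrow> real \<Rightarrow> real^3" where
  "ruling \<gamma> \<alpha> \<beta> s = cos (\<beta> s) *\<^sub>R frenet_e \<gamma> s
      + sin (\<beta> s) *\<^sub>R (cos (\<alpha> s) *\<^sub>R frenet_n \<gamma> s + sin (\<alpha> s) *\<^sub>R frenet_b \<gamma> s)"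

definition pd_s :: "(real \<times> real \<Rightarrow> real^3) \<Rightarrow> real \<times> real \<Rightarrow> real^3" where
  "pd_s F = (\<lambda>(s,v). vector_derivative (\<lambda>t. F (t,v)) (at s))"

definition pd_v :: "(real \<times> real \<Rightarrow> real^3) \<Rightarrow> real \<times> real \<Rightarrow> real^3" where
  "pd_v F = (\<lambda>(s,v). vector_derivative (\<lambda>t. F (s,t)) (at v))"

definition iter_pd :: "bool list \<Rightarrow> (real \<times> real \<Rightarrow> real^3) \<Rightarrow> real \<times> real \<Rightarrow> real^3" where
  "iter_pd ws F = foldr (\<lambda>b H. if b then pd_s H else pd_v H) ws F"

definition smooth_surface_on :: "(real \<times> real) set \<Rightarrow> (real \<times> real \<Rightarrow> real^3) \<Rightarrow> bool" where
  "smooth_surface_on U F \<longleftrightarrow>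
     (\<forall>ws. continuous_on U (iter_pd ws F) \<and>
        (\<forall>(s,v)\<in>U. (\<lambda>t. iter_pd ws F (t,v)) differentiable (at s)
                 \<and> (\<lambda>t. iter_pd ws F (s,t)) differentiable (at v)))"

(* Gaussian curvature K = (LN - M^2)/(EG - F^2), written with X = F_s \<times> F_v *)
definition gauss_curv :: "(real \<times> real \<Rightarrow> real^3) \<Rightarrow> real \<times> real \<Rightarrow> real" where
  "gauss_curv F p =
     (let X = cross3 (pd_s F p) (pd_v F p)
      in ((pd_s (pd_s F) p \<bullet> X) * (pd_v (pd_v F) p \<bullet> X) - (pd_v (pd_s F) p \<bullet> X)^2) / norm X ^ 4)"

definition param_int :: "real \<Rightarrow> real set" where
  "param_int l = {-l/2..l/2}"

(* F is a normal form (a developable strip in D(C)) along the arc-length parametrization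
   gamma on [-l/2,l/2], with first angular function alpha: F is (the germ of) a smooth
   embedding of an open neighbourhood U of [-l/2,l/2]x{0}, of the form
   F(s,v) = gamma(s) + v xi(s), with zero Gaussian curvature. *)
definition normal_form :: "(real \<Rightarrow> real^3) \<Rightarrow> real \<Rightarrow> (real \<Rightarrow> real) \<Rightarrow> (real \<times> real \<Rightarrow> real^3) \<Rightarrow> bool" where
  "normal_form \<gamma> l \<alpha> F \<longleftrightarrow>
     (\<exists>\<beta> U. open U \<and> param_int l \<times> {0} \<subseteq> U \<and> smooth_surface_on U F
        \<and> inj_on F U \<and> continuous_on (F ` U) (inv_into U F)
        \<and> (\<forall>p\<in>U. cross3 (pd_s F p) (pd_v F p) \<noteq> 0)
        \<and> (\<forall>p\<in>U. gauss_curv F p = 0)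
        \<and> (\<forall>(s,v)\<in>U. F (s,v) = \<gamma> s + v *\<^sub>R ruling \<gamma> \<alpha> \<beta> s)
        \<and> (\<forall>s\<in>param_int l. 0 < \<bar>\<alpha> s\<bar> \<and> \<bar>\<alpha> s\<bar> < pi/2 \<and> 0 < \<beta> s \<and> \<beta> s < pi))"

(* admissibility: geodesic curvature mu = kappa cos alpha < min kappa everywhere *)
definition admissible :: "(real \<Rightarrow> real^3) \<Rightarrow> real \<Rightarrow> (real \<Rightarrow> real) \<Rightarrow> bool" where
  "admissible \<gamma> l \<alpha> \<longleftrightarrow>
     (\<forall>s\<in>param_int l. curvature \<gamma> s * cos (\<alpha> s) < Inf (curvature \<gamma> ` param_int l))"

definition isometry3 :: "(real^3 \<Rightarrow> real^3) \<Rightarrow> bool" where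
  "isometry3 T \<longleftrightarrow> (\<forall>x y. dist (T x) (T y) = dist x y)"

definition Omega :: "real \<Rightarrow> real \<Rightarrow> (real \<times> real) set" where
  "Omega l \<epsilon> = param_int l \<times> {-\<epsilon><..<\<epsilon>}"

definition congruent_small :: "real \<Rightarrow> (real \<times> real \<Rightarrow> real^3) \<Rightarrow> (real \<times> real \<Rightarrow> real^3) \<Rightarrow> bool" where
  "congruent_small l F G \<longleftrightarrow>
     (\<exists>T \<epsilon>0. isometry3 T \<and> \<epsilon>0 > 0 \<and>
        (\<forall>\<epsilon>. 0 < \<epsilon> \<and> \<epsilon> < \<epsilon>0 \<longrightarrow> T ` (F ` Omega l \<epsilon>) = G ` Omega l \<epsilon>))"

definition positive_symmetry :: "(real^3 \<Rightarrow> real^3) \<Rightarrow> (real^3) set \<Rightarrow> bool" where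
  "positive_symmetry T C \<longleftrightarrow>
     isometry3 T \<and> det (matrix (\<lambda>x. T x - T 0)) > 0 \<and> T \<noteq> id \<and> T ` C = C"

end

theory Submission
  imports Defs
begin
lemma vd_local:
  assumes "open S" "s \<in> S" "\<And>t. t \<in> S \<Longrightarrow> g t = h t"
  shows "vd g s = vd h s"
proof -
  have "(g has_vector_derivative d) (at s) \<longleftrightarrow> (h has_vector_derivative d) (at s)" for d
    using has_vector_derivative_transform_within_open[of g d s S h]
      has_vector_derivative_transform_within_open[of h d s S g] assms by auto
  then show ?thesis unfolding vd_def vector_derivative_def by simp
qed

lemma vd_at: "(g has_vector_derivative d) (at s) \<Longrightarrow> vd g s = d"
  unfolding vd_def by (rule vector_derivative_at)

lemma Qlim:
  fixes c :: "real \<Rightarrow> 'a::real_normed_vector"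
  assumes "(c has_vector_derivative d) (at s)" "norm d = 1"
  shows "((\<lambda>t. norm (c t - c s) / \<bar>t - s\<bar>) \<longlongrightarrow> 1) (at s within S)"
proof -
  have "((\<lambda>y. norm (c y - c s - (y - s) *\<^sub>R d) / norm (y - s)) \<longlongrightarrow> 0) (at s)"
    using assms(1) unfolding has_vector_derivative_def has_derivative_iff_norm by simp
  then have lim0: "((\<lambda>y. norm (c y - c s - (y - s) *\<^sub>R d) / \<bar>y - s\<bar>) \<longlongrightarrow> 0) (at s)" by simp
  have ev: "\<forall>\<^sub>F t in at s. norm (norm (c t - c s) / \<bar>t - s\<bar> - 1) \<le> norm (c t - c s - (t - s) *\<^sub>R d) / \<bar>t - s\<bar>"
  proof (rule eventually_at_filter[THEN iffD2], rule always_eventually, intro allI impI)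
    fix t assume "t \<noteq> s"
    then have p: "\<bar>t - s\<bar> > 0" by simp
    have nd: "norm ((t - s) *\<^sub>R d) = \<bar>t - s\<bar>" using assms(2) by simp
    have "norm (norm (c t - c s) / \<bar>t - s\<bar> - 1) = \<bar>norm (c t - c s) - norm ((t - s) *\<^sub>R d)\<bar> / \<bar>t - s\<bar>"
      unfolding nd using p by (simp add: field_simps)
    also have "\<dots> \<le> norm (c t - c s - (t - s) *\<^sub>R d) / \<bar>t - s\<bar>"
      using p by (intro divide_right_mono norm_triangle_ineq3) auto
    finally show "norm (norm (c t - c s) / \<bar>t - s\<bar> - 1) \<le> norm (c t - c s - (t - s) *\<^sub>R d) / \<bar>t - s\<bar>" .
  qed
  have "((\<lambda>t. norm (c t - c s) / \<bar>t - s\<bar> - 1) \<longlongrightarrow> 0) (at s)"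
    by (rule Lim_null_comparison[OF ev lim0])
  then have "((\<lambda>t. norm (c t - c s) / \<bar>t - s\<bar>) \<longlongrightarrow> 1) (at s)"
    using LIM_zero_iff by blast
  then show ?thesis by (rule tendsto_mono[OF at_le, rotated]) simp
qed

lemma iso_cont: "(\<And>x y. dist (T x) (T y) = dist x y) \<Longrightarrow> continuous_on S T"
  unfolding continuous_on_iff by metis

lemma arc:
  fixes c :: "real \<Rightarrow> 'a::euclidean_space" and L :: real
  assumes L: "L > 0"
    and der: "\<And>s. s \<in> {-L..L} \<Longrightarrow> (c has_vector_derivative c' s) (at s)"
    and unit: "\<And>s. s \<in> {-L..L} \<Longrightarrow> norm (c' s) = 1"
    and inj: "inj_on c {-L..L}"
    and iso: "\<And>x y. dist (T x) (T y) = dist x y"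
    and img: "T ` c ` {-L..L} = c ` {-L..L}"
  shows "(\<forall>s\<in>{-L..L}. T (c s) = c s) \<or> (\<forall>s\<in>{-L..L}. T (c s) = c (-s))"
proof -
  define I where "I = {-L..L}"
  define \<psi> where "\<psi> = inv_into I c"
  define \<phi> where "\<phi> = (\<lambda>s. \<psi> (T (c s)))"
  have cont_c: "continuous_on I c"
    unfolding I_def by (rule continuous_on_vector_derivative) (use der has_vector_derivative_at_within in blast)
  have Tc: "T (c s) \<in> c ` I" if "s \<in> I" for s using img that unfolding I_def by blast
  have phiI: "\<phi> s \<in> I" if "s \<in> I" for s
    unfolding \<phi>_def \<psi>_def using Tc[OF that] by (metis inv_into_into)
  have cphi: "c (\<phi> s) = T (c s)" if "s \<in> I" for s
    unfolding \<phi>_def \<psi>_def using Tc[OF that] by (metis f_inv_into_f)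
  have injT: "T x = T y \<Longrightarrow> x = y" for x y using iso[of x y] by simp
  have injc: "\<And>x y. x \<in> I \<Longrightarrow> y \<in> I \<Longrightarrow> c x = c y \<Longrightarrow> x = y" using inj unfolding I_def inj_on_def by blast
  have inj_phi: "inj_on \<phi> I"
  proof (rule inj_onI)
    fix x y assume "x \<in> I" "y \<in> I" "\<phi> x = \<phi> y"
    then have "T (c x) = T (c y)" using cphi by metis
    then show "x = y" using injT injc \<open>x \<in> I\<close> \<open>y \<in> I\<close> by blast
  qed
  have surj: "\<exists>s\<in>I. \<phi> s = t" if "t \<in> I" for t
  proof -
    have "c t \<in> T ` c ` I" using img that unfolding I_def by blast
    then obtain s where s: "s \<in> I" "c t = T (c s)" by blast
    then have "c (\<phi> s) = c t" using cphi by simp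
    then show ?thesis using s phiI injc that by blast
  qed
  have cont_psi: "continuous_on (c ` I) \<psi>"
    unfolding \<psi>_def by (rule continuous_on_inv[OF cont_c]) (use inj in \<open>auto simp: I_def inv_into_f_f\<close>)
  have cont_Tc: "continuous_on I (\<lambda>s. T (c s))"
    by (rule continuous_on_compose2[OF iso_cont[OF iso] cont_c]) auto
  have cont_phi: "continuous_on I \<phi>"
    unfolding \<phi>_def by (rule continuous_on_compose2[OF cont_psi cont_Tc]) (use Tc in blast)
  have mono: "strict_mono_on I \<phi> \<or> strict_antimono_on I \<phi>"
    using injective_eq_monotone_map[of I \<phi>] cont_phi inj_phi by (simp add: I_def is_interval_cc)
  have ratio: "((\<lambda>t. \<bar>\<phi> t - \<phi> s\<bar> / \<bar>t - s\<bar>) \<longlongrightarrow> 1) (at s within I)" if sI: "s \<in> I" for s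
  proof -
    have Q1: "((\<lambda>t. norm (c t - c s) / \<bar>t - s\<bar>) \<longlongrightarrow> 1) (at s within I)"
      using Qlim[OF der unit] sI unfolding I_def by blast
    have Q2: "((\<lambda>u. norm (c u - c (\<phi> s)) / \<bar>u - \<phi> s\<bar>) \<longlongrightarrow> 1) (at (\<phi> s) within I)"
      using Qlim[OF der unit] phiI[OF sI] unfolding I_def by blast
    have fl: "filterlim \<phi> (at (\<phi> s) within I) (at s within I)"
    proof (rule filterlim_at_withinI)
      show "(\<phi> \<longlongrightarrow> \<phi> s) (at s within I)"
        using cont_phi sI continuous_on_def by blast
      show "\<forall>\<^sub>F x in at s within I. \<phi> x \<in> I - {\<phi> s}"
        unfolding eventually_at_filter
        by (rule always_eventually) (use phiI inj_phi sI in \<open>auto simp: inj_on_def\<close>)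
    qed
    have Q2': "((\<lambda>t. norm (c (\<phi> t) - c (\<phi> s)) / \<bar>\<phi> t - \<phi> s\<bar>) \<longlongrightarrow> 1) (at s within I)"
      using filterlim_compose[OF Q2 fl] by simp
    have "((\<lambda>t. (norm (c t - c s) / \<bar>t - s\<bar>) / (norm (c (\<phi> t) - c (\<phi> s)) / \<bar>\<phi> t - \<phi> s\<bar>)) \<longlongrightarrow> 1 / 1) (at s within I)"
      by (rule tendsto_divide[OF Q1 Q2']) simp
    then have lim: "((\<lambda>t. (norm (c t - c s) / \<bar>t - s\<bar>) / (norm (c (\<phi> t) - c (\<phi> s)) / \<bar>\<phi> t - \<phi> s\<bar>)) \<longlongrightarrow> 1) (at s within I)" by simp
    show ?thesis
    proof (rule Lim_transform_eventually[OF lim])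
      show "\<forall>\<^sub>F t in at s within I. norm (c t - c s) / \<bar>t - s\<bar> / (norm (c (\<phi> t) - c (\<phi> s)) / \<bar>\<phi> t - \<phi> s\<bar>) = \<bar>\<phi> t - \<phi> s\<bar> / \<bar>t - s\<bar>"
        unfolding eventually_at_filter
      proof (rule always_eventually, intro allI impI)
        fix t assume t: "t \<noteq> s" "t \<in> I"
        have e: "norm (c (\<phi> t) - c (\<phi> s)) = norm (c t - c s)"
          using cphi t sI iso[of "c t" "c s"] by (simp add: dist_norm)
        have n0: "norm (c t - c s) \<noteq> 0" using injc t sI by auto
        have p0: "\<phi> t \<noteq> \<phi> s" using inj_phi t sI by (auto simp: inj_on_def)
        show "norm (c t - c s) / \<bar>t - s\<bar> / (norm (c (\<phi> t) - c (\<phi> s)) / \<bar>\<phi> t - \<phi> s\<bar>) = \<bar>\<phi> t - \<phi> s\<bar> / \<bar>t - s\<bar>"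
          unfolding e using n0 p0 t by (simp add: field_simps)
      qed
    qed
  qed
  have sI: "-L \<in> I" "L \<in> I" using L by (auto simp: I_def)
  from mono show ?thesis
  proof
    assume sm: "strict_mono_on I \<phi>"
    have d: "((\<lambda>s. \<phi> s - s) has_field_derivative 0) (at s within I)" if s: "s \<in> I" for s
    proof -
      have "(\<phi> has_field_derivative 1) (at s within I)"
        unfolding has_field_derivative_iff
      proof (rule Lim_transform_eventually[OF ratio[OF s]])
        show "\<forall>\<^sub>F t in at s within I. \<bar>\<phi> t - \<phi> s\<bar> / \<bar>t - s\<bar> = (\<phi> t - \<phi> s) / (t - s)"
          unfolding eventually_at_filter
        proof (rule always_eventually, intro allI impI)
          fix t assume t: "t \<noteq> s" "t \<in> I"
          show "\<bar>\<phi> t - \<phi> s\<bar> / \<bar>t - s\<bar> = (\<phi> t - \<phi> s) / (t - s)"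
          proof (cases "t < s")
            case True then have "\<phi> t < \<phi> s" using sm t s by (auto simp: strict_mono_on_def)
            then show ?thesis using True by (simp add: abs_if field_simps)
          next
            case False then have "s < t" using t by simp
            then have "\<phi> s < \<phi> t" using sm t s by (auto simp: strict_mono_on_def)
            then show ?thesis using \<open>s < t\<close> by simp
          qed
        qed
      qed
      then show ?thesis by (auto intro!: derivative_eq_intros)
    qed
    obtain k where k: "\<forall>x\<in>I. \<phi> x - x = k"
      using has_field_derivative_zero_constant[of I "\<lambda>s. \<phi> s - s"] d by (auto simp: I_def)
    obtain t0 where t0: "t0 \<in> I" "\<phi> t0 = -L" using surj sI by blast
    have "\<phi> (-L) = -L"
    proof (rule ccontr)
      assume "\<phi> (-L) \<noteq> -L"
      then have "t0 \<noteq> -L" using t0 by auto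
      then have "-L < t0" using t0 by (auto simp: I_def)
      then have "\<phi> (-L) < \<phi> t0" using sm t0(1) sI(1) unfolding strict_mono_on_def by blast
      then show False using phiI[OF sI(1)] t0 by (auto simp: I_def)
    qed
    then have "k = 0" using k sI by force
    then have "\<forall>s\<in>I. T (c s) = c s" using k cphi by (metis diff_eq_diff_eq diff_self)
    then show ?thesis unfolding I_def by blast
  next
    assume sm: "strict_antimono_on I \<phi>"
    have d: "((\<lambda>s. \<phi> s + s) has_field_derivative 0) (at s within I)" if s: "s \<in> I" for s
    proof -
      have "(\<phi> has_field_derivative -1) (at s within I)"
        unfolding has_field_derivative_iff
      proof (rule Lim_transform_eventually[OF tendsto_minus[OF ratio[OF s]]])
        show "\<forall>\<^sub>F t in at s within I. - (\<bar>\<phi> t - \<phi> s\<bar> / \<bar>t - s\<bar>) = (\<phi> t - \<phi> s) / (t - s)"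
          unfolding eventually_at_filter
        proof (rule always_eventually, intro allI impI)
          fix t assume t: "t \<noteq> s" "t \<in> I"
          show "- (\<bar>\<phi> t - \<phi> s\<bar> / \<bar>t - s\<bar>) = (\<phi> t - \<phi> s) / (t - s)"
          proof (cases "t < s")
            case True then have "\<phi> t > \<phi> s" using sm t s by (auto simp: monotone_on_def)
            then show ?thesis using True by (simp add: abs_if field_simps)
          next
            case False then have "s < t" using t by simp
            then have "\<phi> s > \<phi> t" using sm t s by (auto simp: monotone_on_def)
            then show ?thesis using \<open>s < t\<close> by (simp add: abs_if field_simps)
          qed
        qed
      qed
      then show ?thesis by (auto intro!: derivative_eq_intros)
    qed
    obtain k where k: "\<forall>x\<in>I. \<phi> x + x = k"
      using has_field_derivative_zero_constant[of I "\<lambda>s. \<phi> s + s"] d by (auto simp: I_def)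
    obtain t0 where t0: "t0 \<in> I" "\<phi> t0 = L" using surj sI by blast
    have "\<phi> (-L) = L"
    proof (rule ccontr)
      assume "\<phi> (-L) \<noteq> L"
      then have "t0 \<noteq> -L" using t0 by auto
      then have "-L < t0" using t0 by (auto simp: I_def)
      then have "\<phi> (-L) > \<phi> t0" using sm t0(1) sI(1) unfolding monotone_on_def by blast
      then show False using phiI[OF sI(1)] t0 by (auto simp: I_def)
    qed
    then have "k = 0" using k sI by force
    then have "\<forall>s\<in>I. T (c s) = c (-s)" using k cphi by (metis add.commute add_eq_0_iff)
    then show ?thesis unfolding I_def by blast
  qed
qed

lemma iso_orth:
  assumes "isometry3 T"
  shows "orthogonal_transformation (\<lambda>x. T x - T 0)"
  using assms unfolding isometry3_def orthogonal_transformation_isometry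
  by (simp add: dist_norm)


lemma lowerbound:
  fixes c :: "real \<Rightarrow> 'a::real_normed_vector"
  assumes "compact I" "0 \<in> I" "continuous_on I c" "inj_on c I"
    "(c has_vector_derivative d) (at 0)" "norm d = 1"
  shows "\<exists>k>0. \<forall>s\<in>I. k * \<bar>s\<bar> \<le> norm (c s - c 0)"
proof -
  define q where "q s = (if s = 0 then 1 else norm (c s - c 0) / \<bar>s\<bar>)" for s
  have cq: "continuous (at x within I) q" if x: "x \<in> I" for x
  proof (cases "x = 0")
    case True
    have "((\<lambda>t. norm (c t - c 0) / \<bar>t - 0\<bar>) \<longlongrightarrow> q 0) (at 0 within I)"
      using Qlim[OF assms(5,6)] by (simp add: q_def)
    then have "(q \<longlongrightarrow> q 0) (at 0 within I)"
    proof (rule Lim_transform_eventually)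
      show "\<forall>\<^sub>F t in at 0 within I. norm (c t - c 0) / \<bar>t - 0\<bar> = q t"
        unfolding eventually_at_filter by (rule always_eventually) (simp add: q_def)
    qed
    then show ?thesis using True by (simp add: continuous_within)
  next
    case False
    have cc: "continuous (at x within I) c" using assms(3) x continuous_on_eq_continuous_within by blast
    have "continuous (at x within I) (\<lambda>t. norm (c t - c 0) / \<bar>t\<bar>)"
      using False by (intro continuous_intros cc) auto
    then have "((\<lambda>t. norm (c t - c 0) / \<bar>t\<bar>) \<longlongrightarrow> q x) (at x within I)"
      using False by (simp add: continuous_within q_def)
    then have "(q \<longlongrightarrow> q x) (at x within I)"
    proof (rule Lim_transform_eventually)
      have "\<forall>\<^sub>F t in at x within I. t \<noteq> 0"
        unfolding eventually_at
        by (rule exI[of _ "\<bar>x\<bar>"]) (use False in \<open>auto simp: dist_real_def\<close>)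
      then show "\<forall>\<^sub>F t in at x within I. norm (c t - c 0) / \<bar>t\<bar> = q t"
        by eventually_elim (simp add: q_def)
    qed
    then show ?thesis by (simp add: continuous_within)
  qed
  then have "continuous_on I q" using continuous_on_eq_continuous_within by blast
  then obtain s0 where s0: "s0 \<in> I" "\<forall>y\<in>I. q s0 \<le> q y"
    using continuous_attains_inf[OF assms(1)] assms(2) by blast
  have pos: "q s0 > 0"
  proof (cases "s0 = 0")
    case False
    then have "c s0 \<noteq> c 0" using assms(2,4) s0(1) by (auto simp: inj_on_def)
    then show ?thesis using False by (simp add: q_def)
  qed (simp add: q_def)
  have "q s0 * \<bar>s\<bar> \<le> norm (c s - c 0)" if "s \<in> I" for s
  proof (cases "s = 0")
    case False
    have "q s0 \<le> norm (c s - c 0) / \<bar>s\<bar>" using s0(2) that False by (auto simp: q_def)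
    then show ?thesis using False by (simp add: field_simps)
  qed simp
  then show ?thesis using pos by blast
qed

lemma planar_id:
  fixes c :: "real \<Rightarrow> real^3"
  assumes np: "\<not> (\<exists>a d. a \<noteq> 0 \<and> (\<forall>s\<in>I. a \<bullet> c s = d))"
    and "0 \<in> I" and iso: "isometry3 T" and fx: "\<forall>s\<in>I. T (c s) = c s"
  shows "T = id"
proof -
  define f where "f x = T x - T 0" for x
  have ot: "orthogonal_transformation f" unfolding f_def by (rule iso_orth[OF iso])
  then have lf: "linear f" by (simp add: orthogonal_transformation_def)
  define D where "D = (\<lambda>s. c s - c 0) ` I"
  have fD: "f x = x" if xD: "x \<in> D" for x
  proof -
    obtain s where s: "s \<in> I" "x = c s - c 0" using xD unfolding D_def by blast
    have "f x = f (c s) - f (c 0)" using s linear_diff[OF lf] by simp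
    also have "\<dots> = c s - c 0" unfolding f_def using fx s assms(2) by simp
    finally show ?thesis using s by simp
  qed
  have sub: "subspace {x. f x = x}"
    unfolding subspace_def using linear_add[OF lf] linear_cmul[OF lf] linear_0[OF lf] by auto
  have spanD: "span D \<subseteq> {x. f x = x}" using span_minimal[OF _ sub] fD by blast
  have "dim D = DIM(real^3)"
  proof (rule ccontr)
    assume "dim D \<noteq> DIM(real^3)"
    then have "dim D < DIM(real^3)" using dim_subset_UNIV[of D] by simp
    then obtain a :: "real^3" where a: "a \<noteq> 0" "\<And>y. y \<in> span D \<Longrightarrow> orthogonal a y"
      using orthogonal_to_subspace_exists by blast
    have "\<forall>s\<in>I. a \<bullet> c s = a \<bullet> c 0"
    proof
      fix s assume "s \<in> I"
      then have "c s - c 0 \<in> span D" unfolding D_def by (intro span_base) blast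
      then have "a \<bullet> (c s - c 0) = 0" using a(2) by (simp add: orthogonal_def)
      then show "a \<bullet> c s = a \<bullet> c 0" by (simp add: inner_diff_right)
    qed
    then show False using np a(1) by blast
  qed
  then have "span D = UNIV" using dim_eq_full by blast
  then have fid: "f x = x" for x using spanD by blast
  have "T 0 = 0" using fid[of "c 0"] fx assms(2) unfolding f_def by simp
  then show ?thesis using fid unfolding f_def by (auto simp: fun_eq_iff)
qed

lemma deriv_eps:
  fixes c :: "real \<Rightarrow> 'a::real_normed_vector"
  assumes "(c has_vector_derivative e0) (at x)" "r > 0"
  shows "\<exists>\<delta>>0. \<forall>s. \<bar>s - x\<bar> < \<delta> \<longrightarrow> norm (c s - c x - (s - x) *\<^sub>R e0) \<le> r * \<bar>s - x\<bar>"
proof -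
  have "((\<lambda>y. norm (c y - c x - (y - x) *\<^sub>R e0) / norm (y - x)) \<longlongrightarrow> 0) (at x)"
    using assms(1) unfolding has_vector_derivative_def has_derivative_iff_norm by simp
  then have "\<forall>\<^sub>F y in at x. dist (norm (c y - c x - (y - x) *\<^sub>R e0) / norm (y - x)) 0 < r"
    using assms(2) tendstoD by blast
  then obtain d where d: "d > 0" "\<And>y. y \<noteq> x \<Longrightarrow> dist y x < d \<Longrightarrow> norm (c y - c x - (y - x) *\<^sub>R e0) / \<bar>y - x\<bar> < r"
    unfolding eventually_at by auto
  have "norm (c s - c x - (s - x) *\<^sub>R e0) \<le> r * \<bar>s - x\<bar>" if "\<bar>s - x\<bar> < d" for s
  proof (cases "s = x")
    case False
    then have "norm (c s - c x - (s - x) *\<^sub>R e0) / \<bar>s - x\<bar> < r" using d that by (simp add: dist_real_def)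
    then show ?thesis using False by (simp add: field_simps)
  qed simp
  then show ?thesis using d(1) by blast
qed

lemma small_zero:
  fixes x K0 :: real
  assumes "K0 \<ge> 0" "\<And>r. r > 0 \<Longrightarrow> \<bar>x\<bar> \<le> r * K0"
  shows "x = 0"
proof (rule ccontr)
  assume "x \<noteq> 0"
  define r where "r = \<bar>x\<bar> / (2 * (K0 + 1))"
  have r: "r > 0" using \<open>x \<noteq> 0\<close> assms(1) by (simp add: r_def)
  have "\<bar>x\<bar> \<le> r * K0" using assms(2)[OF r] .
  also have "\<dots> = \<bar>x\<bar> * (K0 / (2 * (K0 + 1)))" unfolding r_def by simp
  also have "\<dots> < \<bar>x\<bar> * 1"
  proof (rule mult_strict_left_mono)
    show "K0 / (2 * (K0 + 1)) < 1" using assms(1) by (simp add: field_simps)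
  qed (use \<open>x \<noteq> 0\<close> in simp)
  finally show False by simp
qed

lemma aux_lt:
  fixes k d C :: real
  assumes "k > 0" "d > 0" "C \<ge> 0"
  shows "(k*d/(2 * (C+1))) * C / k < d"
proof -
  have C1: "C + 1 \<noteq> 0" using assms(3) by linarith
  have "(k*d/(2 * (C+1))) * C / k = d * (C/(2 * (C+1)))" using assms(1)
    by (metis (no_types, opaque_lifting) mult.commute nonzero_mult_div_cancel_left times_divide_eq_left times_divide_eq_right less_irrefl)
  also have "\<dots> < d * 1"
    by (rule mult_strict_left_mono) (use assms in \<open>simp_all add: field_simps\<close>)
  finally show ?thesis by simp
qed

lemma tangent:
  fixes c \<xi> :: "real \<Rightarrow> real^3" and F G :: "real \<times> real \<Rightarrow> real^3" and A :: "real^3 \<Rightarrow> real^3"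
  assumes ot: "orthogonal_transformation A"
    and TA: "\<And>x. T x = A x + T 0"
    and I0: "0 \<in> I"
    and Fform: "\<And>s v. s \<in> I \<Longrightarrow> \<bar>v\<bar> < dF \<Longrightarrow> F (s,v) = c s + v *\<^sub>R \<xi> s"
    and Gform: "\<And>v. \<bar>v\<bar> < dG \<Longrightarrow> G (0,v) = c 0 + v *\<^sub>R \<eta>"
    and dpos: "dF > 0" "dG > 0" "\<epsilon>0 > 0"
    and cong: "\<And>\<epsilon>. 0 < \<epsilon> \<Longrightarrow> \<epsilon> < \<epsilon>0 \<Longrightarrow> T ` F ` (I \<times> {-\<epsilon><..<\<epsilon>}) = G ` (I \<times> {-\<epsilon><..<\<epsilon>})"
    and Tc0: "T (c 0) = c 0"
    and der: "(c has_vector_derivative e0) (at 0)"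
    and cxi: "continuous (at 0 within I) \<xi>"
    and B: "\<And>s. s \<in> I \<Longrightarrow> norm (\<xi> s) \<le> B"
    and k: "k > 0" "\<And>s. s \<in> I \<Longrightarrow> k * \<bar>s\<bar> \<le> norm (c s - c 0)"
  shows "\<eta> \<bullet> A (cross3 e0 (\<xi> 0)) = 0"
proof -
  define M where "M = cross3 e0 (\<xi> 0)"
  define C1 where "C1 = norm \<eta> + 2 * B"
  define K0 where "K0 = norm M * (C1 / k + 2)"
  have lA: "linear A" using ot by (simp add: orthogonal_transformation_def)
  have B0: "B \<ge> 0" using B[OF I0] norm_ge_zero order_trans by blast
  have C1: "C1 \<ge> 0" using B0 by (simp add: C1_def)
  have K0: "K0 \<ge> 0" using C1 k(1) by (simp add: K0_def)
  show ?thesis unfolding M_def[symmetric]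
  proof (rule small_zero[OF K0])
    fix r :: real assume r: "r > 0"
    obtain \<delta>1 where d1: "\<delta>1 > 0" "\<And>s. \<bar>s\<bar> < \<delta>1 \<Longrightarrow> norm (c s - c 0 - s *\<^sub>R e0) \<le> r * \<bar>s\<bar>"
      using deriv_eps[OF der r] by auto
    obtain \<delta>2 where d2: "\<delta>2 > 0" "\<And>s. s \<in> I \<Longrightarrow> \<bar>s\<bar> < \<delta>2 \<Longrightarrow> norm (\<xi> s - \<xi> 0) < r"
      using cxi r unfolding continuous_within_eps_delta by (metis dist_norm dist_real_def diff_zero)
    define v where "v = min (dG/2) (min (dF/4) (min (\<epsilon>0/4) (min (k*\<delta>1/(2 * (C1+1))) (k*\<delta>2/(2 * (C1+1))))))"
    have vpos: "v > 0" using dpos d1 d2 k C1 by (simp add: v_def)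
    have v0: "v \<le> dG/2" "v \<le> dF/4" "v \<le> \<epsilon>0/4" unfolding v_def
      by (rule min.cobounded1, rule min.coboundedI2, rule min.cobounded1,
          rule min.coboundedI2, rule min.coboundedI2, rule min.cobounded1)
    have v1: "v < dG" "2 * v < dF" "2 * v < \<epsilon>0" using dpos v0 vpos by linarith+
    have v2: "v \<le> k*\<delta>1/(2 * (C1+1))" "v \<le> k*\<delta>2/(2 * (C1+1))" unfolding v_def
      by (rule min.coboundedI2, rule min.coboundedI2, rule min.coboundedI2, rule min.cobounded1,
          rule min.coboundedI2, rule min.coboundedI2, rule min.coboundedI2, rule min.cobounded2)
    have "G (0,v) \<in> G ` (I \<times> {-(2 * v)<..<2 * v})" using I0 vpos by auto
    also have "\<dots> = T ` F ` (I \<times> {-(2 * v)<..<2 * v})" using cong[of "2 * v"] vpos v1 by simp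
    finally have "G (0,v) \<in> T ` F ` (I \<times> {-(2 * v)<..<2 * v})" .
    then obtain s w where sw: "s \<in> I" "\<bar>w\<bar> < 2 * v" "G (0,v) = T (F (s,w))"
    proof -
      obtain p where p: "p \<in> I \<times> {-(2 * v)<..<2 * v}" "G (0,v) = T (F p)"
        using \<open>G (0,v) \<in> T ` F ` (I \<times> {-(2 * v)<..<2 * v})\<close> by blast
      obtain s w where "p = (s,w)" by (cases p)
      then show ?thesis using p that[of s w] by (auto simp: abs_less_iff)
    qed
    have Fsw: "F (s,w) = c s + w *\<^sub>R \<xi> s" using Fform sw v1 by simp
    have Gv: "G (0,v) = c 0 + v *\<^sub>R \<eta>" using Gform v1 vpos by simp
    define X where "X = c s - c 0 + w *\<^sub>R \<xi> s"
    have "c 0 + v *\<^sub>R \<eta> = A (c s + w *\<^sub>R \<xi> s) + T 0" using sw(3) Fsw Gv TA by metis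
    moreover have "c 0 = A (c 0) + T 0" using Tc0 TA by metis
    ultimately have vX: "v *\<^sub>R \<eta> = A X"
      unfolding X_def using linear_diff[OF lA] linear_add[OF lA]
      by (metis (no_types, lifting) add_diff_cancel_left' add_diff_cancel_right add_diff_eq)
    have nX: "norm X = v * norm \<eta>"
    proof -
      have "norm X = norm (A X)" using orthogonal_transformation_norm[OF ot] by simp
      also have "\<dots> = norm (v *\<^sub>R \<eta>)" using vX by simp
      also have "\<dots> = v * norm \<eta>" using vpos by simp
      finally show ?thesis .
    qed
    have "norm (c s - c 0) \<le> norm X + norm (w *\<^sub>R \<xi> s)"
      unfolding X_def by (metis add_diff_cancel norm_triangle_ineq4)
    also have "norm (w *\<^sub>R \<xi> s) \<le> 2 * v * B"
      using sw(2) B[OF sw(1)] by (simp add: mult_mono')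
    finally have ncs: "norm (c s - c 0) \<le> v * C1" unfolding nX C1_def by (simp add: algebra_simps)
    have sb: "\<bar>s\<bar> \<le> v * C1 / k" using k(2)[OF sw(1)] ncs k(1) by (simp add: field_simps)
    have "v * C1 / k < \<delta>1" "v * C1 / k < \<delta>2"
    proof -
      have "v * C1 / k \<le> (k*\<delta>1/(2 * (C1+1))) * C1 / k"
        using v2 C1 k(1) by (intro divide_right_mono mult_right_mono) auto
      also have "\<dots> < \<delta>1" using aux_lt k(1) d1(1) C1 by blast
      finally show "v * C1 / k < \<delta>1" .
      have "v * C1 / k \<le> (k*\<delta>2/(2 * (C1+1))) * C1 / k"
        using v2 C1 k(1) by (intro divide_right_mono mult_right_mono) auto
      also have "\<dots> < \<delta>2" using aux_lt k(1) d2(1) C1 by blast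
      finally show "v * C1 / k < \<delta>2" .
    qed
    then have s1: "\<bar>s\<bar> < \<delta>1" and s2: "\<bar>s\<bar> < \<delta>2" using sb by linarith+
    have e0M: "e0 \<bullet> M = 0" and x0M: "\<xi> 0 \<bullet> M = 0" unfolding M_def by (simp_all add: dot_cross_self)
    have XM: "X \<bullet> M = (c s - c 0 - s *\<^sub>R e0) \<bullet> M + w * ((\<xi> s - \<xi> 0) \<bullet> M)"
      unfolding X_def using e0M x0M by (simp add: algebra_simps inner_add_left inner_diff_left)
    have "\<bar>X \<bullet> M\<bar> \<le> norm (c s - c 0 - s *\<^sub>R e0) * norm M + \<bar>w\<bar> * (norm (\<xi> s - \<xi> 0) * norm M)"
    proof -
      have "\<bar>X \<bullet> M\<bar> \<le> \<bar>(c s - c 0 - s *\<^sub>R e0) \<bullet> M\<bar> + \<bar>w * ((\<xi> s - \<xi> 0) \<bullet> M)\<bar>"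
        unfolding XM by (rule abs_triangle_ineq)
      also have "\<bar>w * ((\<xi> s - \<xi> 0) \<bullet> M)\<bar> = \<bar>w\<bar> * \<bar>(\<xi> s - \<xi> 0) \<bullet> M\<bar>" by (rule abs_mult)
      also have "\<bar>(c s - c 0 - s *\<^sub>R e0) \<bullet> M\<bar> \<le> norm (c s - c 0 - s *\<^sub>R e0) * norm M"
        by (rule Cauchy_Schwarz_ineq2)
      also have "\<bar>w\<bar> * \<bar>(\<xi> s - \<xi> 0) \<bullet> M\<bar> \<le> \<bar>w\<bar> * (norm (\<xi> s - \<xi> 0) * norm M)"
        by (rule mult_left_mono[OF Cauchy_Schwarz_ineq2]) simp
      finally show ?thesis by simp
    qed
    also have "\<dots> \<le> (r * \<bar>s\<bar>) * norm M + (2 * v) * (r * norm M)"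
      using d1(2)[OF s1] d2(2)[OF sw(1) s2] sw(2)
      by (intro add_mono mult_right_mono mult_mono) auto
    also have "\<dots> \<le> (r * (v * C1 / k)) * norm M + (2 * v) * (r * norm M)"
      using sb r by (intro add_mono mult_right_mono mult_left_mono) auto
    also have "\<dots> = v * (r * K0)" unfolding K0_def by (simp add: algebra_simps)
    finally have XMb: "\<bar>X \<bullet> M\<bar> \<le> v * (r * K0)" .
    have "v * (\<eta> \<bullet> A M) = X \<bullet> M"
    proof -
      have "v * (\<eta> \<bullet> A M) = (v *\<^sub>R \<eta>) \<bullet> A M" by simp
      also have "\<dots> = A X \<bullet> A M" using vX by simp
      also have "\<dots> = X \<bullet> M" using ot by (simp add: orthogonal_transformation_def)
      finally show ?thesis .
    qed
    then have "v * \<bar>\<eta> \<bullet> A M\<bar> = \<bar>X \<bullet> M\<bar>" using vpos by (metis abs_mult abs_of_pos)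
    then have "v * \<bar>\<eta> \<bullet> A M\<bar> \<le> v * (r * K0)" using XMb by simp
    then show "\<bar>\<eta> \<bullet> A M\<bar> \<le> r * K0" using vpos mult_le_cancel_left_pos by blast
  qed
qed

lemma iter_pd_Nil: "iter_pd [] F = F" by (simp add: iter_pd_def)

lemma local_box:
  fixes U :: "(real \<times> real) set"
  assumes "open U" "(s,0) \<in> U"
  shows "\<exists>r>0. \<forall>t w. \<bar>t - s\<bar> < r \<and> \<bar>w\<bar> < r \<longrightarrow> (t,w) \<in> U"
proof -
  obtain R where R: "R > 0" "ball (s,0) R \<subseteq> U" using assms open_contains_ball by blast
  have "(t,w) \<in> U" if "\<bar>t - s\<bar> < R/2" "\<bar>w\<bar> < R/2" for t w :: real
  proof -
    have "dist (s,0) (t,w) = sqrt ((dist s t)\<^sup>2 + (dist 0 w)\<^sup>2)" by (simp add: dist_Pair_Pair)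
    also have "\<dots> \<le> \<bar>dist s t\<bar> + \<bar>dist 0 w\<bar>" by (rule sqrt_sum_squares_le_sum_abs)
    also have "\<dots> < R" using that by (simp add: dist_real_def abs_minus_commute)
    finally show ?thesis using R(2) by auto
  qed
  then show ?thesis using R(1) by (intro exI[of _ "R/2"]) auto
qed

lemma tube:
  fixes U :: "(real \<times> real) set"
  assumes "open U" "param_int l \<times> {0} \<subseteq> U"
  shows "\<exists>d>0. \<forall>s v. s \<in> param_int l \<and> \<bar>v\<bar> < d \<longrightarrow> (s,v) \<in> U"
proof -
  have "compact (param_int l \<times> {0::real})" unfolding param_int_def by (intro compact_Times) auto
  then obtain e where e: "e > 0" "(\<Union>x\<in>param_int l \<times> {0}. ball x e) \<subseteq> U"
    using compact_subset_open_imp_ball_epsilon_subset assms by blast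
  have "(s,v) \<in> U" if "s \<in> param_int l" "\<bar>v\<bar> < e" for s v
  proof -
    have "(s,v) \<in> ball (s,0) e" using that by (simp add: dist_Pair_Pair dist_real_def)
    then show ?thesis using e(2) that(1) by blast
  qed
  then show ?thesis using e(1) by blast
qed

lemma nf_facts:
  fixes \<gamma> :: "real \<Rightarrow> real^3"
  assumes nf: "normal_form \<gamma> l \<alpha> F"
    and gd: "\<And>s. s \<in> param_int l \<Longrightarrow> \<gamma> differentiable (at s)"
  obtains \<beta> d where "d > 0"
    "\<And>s v. s \<in> param_int l \<Longrightarrow> \<bar>v\<bar> < d \<Longrightarrow> F (s,v) = \<gamma> s + v *\<^sub>R ruling \<gamma> \<alpha> \<beta> s"
    "\<And>s. s \<in> param_int l \<Longrightarrow> 0 < \<bar>\<alpha> s\<bar> \<and> \<bar>\<alpha> s\<bar> < pi/2 \<and> 0 < \<beta> s \<and> \<beta> s < pi"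
    "\<And>s. s \<in> param_int l \<Longrightarrow> (ruling \<gamma> \<alpha> \<beta> has_vector_derivative vd (ruling \<gamma> \<alpha> \<beta>) s) (at s)"
    "\<And>s. s \<in> param_int l \<Longrightarrow> vd (ruling \<gamma> \<alpha> \<beta>) s \<bullet> cross3 (vd \<gamma> s) (ruling \<gamma> \<alpha> \<beta> s) = 0"
proof -
  obtain \<beta> U where U: "open U" "param_int l \<times> {0} \<subseteq> U" "smooth_surface_on U F"
    "\<forall>p\<in>U. cross3 (pd_s F p) (pd_v F p) \<noteq> 0"
    "\<forall>p\<in>U. gauss_curv F p = 0"
    "\<forall>(s,v)\<in>U. F (s,v) = \<gamma> s + v *\<^sub>R ruling \<gamma> \<alpha> \<beta> s"
    "\<forall>s\<in>param_int l. 0 < \<bar>\<alpha> s\<bar> \<and> \<bar>\<alpha> s\<bar> < pi/2 \<and> 0 < \<beta> s \<and> \<beta> s < pi"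
    using nf unfolding normal_form_def by blast
  define \<xi> where "\<xi> = ruling \<gamma> \<alpha> \<beta>"
  obtain d where d: "d > 0" "\<And>s v. s \<in> param_int l \<Longrightarrow> \<bar>v\<bar> < d \<Longrightarrow> (s,v) \<in> U"
    using tube[OF U(1,2)] by blast
  have Fd: "F (s,v) = \<gamma> s + v *\<^sub>R \<xi> s" if "s \<in> param_int l" "\<bar>v\<bar> < d" for s v
    using U(6) d(2)[OF that] unfolding \<xi>_def by auto
  have main: "(\<xi> has_vector_derivative vd \<xi> s) (at s) \<and> vd \<xi> s \<bullet> cross3 (vd \<gamma> s) (\<xi> s) = 0"
    if sI: "s \<in> param_int l" for s
  proof -
    have s0U: "(s,0) \<in> U" using U(2) sI by auto
    obtain r where r: "r > 0" "\<And>t w. \<bar>t - s\<bar> < r \<Longrightarrow> \<bar>w\<bar> < r \<Longrightarrow> (t,w) \<in> U"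
      using local_box[OF U(1) s0U] by blast
    have Floc: "F (t,w) = \<gamma> t + w *\<^sub>R \<xi> t" if "\<bar>t - s\<bar> < r" "\<bar>w\<bar> < r" for t w
      using U(6) r(2)[OF that] unfolding \<xi>_def by auto
    define v0 where "v0 = r/2"
    have v0: "v0 > 0" "\<bar>v0\<bar> < r" using r(1) by (auto simp: v0_def)
    have sv0: "(s,v0) \<in> U" using r(2)[of s v0] v0 r(1) by simp
    have "\<forall>(a,b)\<in>U. (\<lambda>t. iter_pd [] F (t,b)) differentiable (at a)"
      using U(3) unfolding smooth_surface_on_def by blast
    then have "(\<lambda>t. iter_pd [] F (t,v0)) differentiable (at s)" using sv0 by blast
    then have Fdiff: "(\<lambda>t. F (t,v0)) differentiable (at s)" by (simp add: iter_pd_Nil)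
    have hg: "(\<gamma> has_vector_derivative vd \<gamma> s) (at s)"
      using gd[OF sI] unfolding vd_def vector_derivative_works .
    obtain D1 where D1: "((\<lambda>t. F (t,v0)) has_vector_derivative D1) (at s)"
      using Fdiff unfolding vector_derivative_works by blast
    have "((\<lambda>t. (1/v0) *\<^sub>R (F (t,v0) - \<gamma> t)) has_vector_derivative (1/v0) *\<^sub>R (D1 - vd \<gamma> s)) (at s)"
      using D1 hg by (auto intro!: derivative_eq_intros)
    moreover have eqx: "(1/v0) *\<^sub>R (F (t,v0) - \<gamma> t) = \<xi> t" if "t \<in> ball s r" for t
      using Floc[of t v0] that v0 by (simp add: dist_real_def abs_minus_commute)
    ultimately have "(\<xi> has_vector_derivative (1/v0) *\<^sub>R (D1 - vd \<gamma> s)) (at s)"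
      using has_vector_derivative_transform_within_open[of _ _ s "ball s r" \<xi>] r(1) by auto
    then have hx: "(\<xi> has_vector_derivative vd \<xi> s) (at s)"
      using vd_at by metis
    have pds: "pd_s F (s,w) = vd \<gamma> s + w *\<^sub>R vd \<xi> s" if "\<bar>w\<bar> < r" for w
    proof -
      have "((\<lambda>t. \<gamma> t + w *\<^sub>R \<xi> t) has_vector_derivative vd \<gamma> s + w *\<^sub>R vd \<xi> s) (at s)"
        using hg hx by (auto intro!: derivative_eq_intros)
      then have "((\<lambda>t. F (t,w)) has_vector_derivative vd \<gamma> s + w *\<^sub>R vd \<xi> s) (at s)"
        by (rule has_vector_derivative_transform_within_open[of _ _ s "ball s r"])
           (use r(1) Floc that in \<open>auto simp: dist_real_def abs_minus_commute\<close>)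
      then show ?thesis unfolding pd_s_def by (simp add: vector_derivative_at)
    qed
    have pdv: "pd_v F (s,w) = \<xi> s" if "\<bar>w\<bar> < r" for w
    proof -
      have "((\<lambda>t. \<gamma> s + t *\<^sub>R \<xi> s) has_vector_derivative \<xi> s) (at w)"
        by (auto intro!: derivative_eq_intros)
      then have "((\<lambda>t. F (s,t)) has_vector_derivative \<xi> s) (at w)"
        by (rule has_vector_derivative_transform_within_open[of _ _ w "ball 0 r"])
           (use r(1) Floc that in \<open>auto simp: dist_real_def\<close>)
      then show ?thesis unfolding pd_v_def by (simp add: vector_derivative_at)
    qed
    have pdvv: "pd_v (pd_v F) (s,0) = 0"
    proof -
      have "((\<lambda>t. \<xi> s) has_vector_derivative 0) (at 0)" by simp
      then have "((\<lambda>t. pd_v F (s,t)) has_vector_derivative 0) (at 0)"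
        by (rule has_vector_derivative_transform_within_open[of _ _ 0 "ball 0 r"])
           (use r(1) pdv in \<open>auto simp: dist_real_def\<close>)
      then show ?thesis unfolding pd_v_def[of "pd_v F"] by (simp add: vector_derivative_at)
    qed
    have pdvs: "pd_v (pd_s F) (s,0) = vd \<xi> s"
    proof -
      have "((\<lambda>t. vd \<gamma> s + t *\<^sub>R vd \<xi> s) has_vector_derivative vd \<xi> s) (at 0)"
        by (auto intro!: derivative_eq_intros)
      then have "((\<lambda>t. pd_s F (s,t)) has_vector_derivative vd \<xi> s) (at 0)"
        by (rule has_vector_derivative_transform_within_open[of _ _ 0 "ball 0 r"])
           (use r(1) pds in \<open>auto simp: dist_real_def\<close>)
      then show ?thesis unfolding pd_v_def[of "pd_s F"] by (simp add: vector_derivative_at)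
    qed
    define X where "X = cross3 (vd \<gamma> s) (\<xi> s)"
    have X: "cross3 (pd_s F (s,0)) (pd_v F (s,0)) = X" unfolding X_def using pds[of 0] pdv[of 0] r(1) by simp
    have Xn: "X \<noteq> 0" using U(4) s0U X by metis
    have "gauss_curv F (s,0) = 0" using U(5) s0U by blast
    then have "- ((vd \<xi> s \<bullet> X)\<^sup>2) / norm X ^ 4 = 0"
      unfolding gauss_curv_def Let_def X pdvv pdvs by simp
    then have "vd \<xi> s \<bullet> X = 0" using Xn by simp
    then show ?thesis using hx unfolding X_def by simp
  qed
  show ?thesis
    by (rule that[of d \<beta>]) (use d(1) Fd U(7) main in \<open>auto simp: \<xi>_def\<close>)
qed

lemma trip_rot: "a \<bullet> cross3 b c = b \<bullet> cross3 c a"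
  by (simp add: cross3_simps)

lemma trip_swap: "a \<bullet> cross3 b c = - (a \<bullet> cross3 c b)"
  by (simp add: cross3_simps)

lemma vtp: "cross3 a (cross3 b c) = (a \<bullet> c) *\<^sub>R b - (a \<bullet> b) *\<^sub>R c"
  by (simp add: cross3_simps forall_3)

lemma cross_self3: "cross3 a a = 0" by (simp add: cross3_simps)
lemma trip_self: "a \<bullet> cross3 a b = 0" "a \<bullet> cross3 b a = 0" by (simp_all add: cross3_simps)

lemma cross_lin:
  "cross3 a (x *\<^sub>R b + y *\<^sub>R c) = x *\<^sub>R cross3 a b + y *\<^sub>R cross3 a c"
  "cross3 (x *\<^sub>R b + y *\<^sub>R c) a = x *\<^sub>R cross3 b a + y *\<^sub>R cross3 c a"
  by (simp_all add: cross3_simps)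

lemma copl: "(a1 *\<^sub>R e + b1 *\<^sub>R w) \<bullet> cross3 e (a2 *\<^sub>R e + b2 *\<^sub>R w) = 0"
  by (simp add: cross3_simps)

lemma key_alg:
  fixes e e' w d1 d2 :: "real^3"
  assumes x2: "x2 = c2 *\<^sub>R e + s2 *\<^sub>R w" and x1: "x1 = c1 *\<^sub>R e + s1 *\<^sub>R w"
    and s: "s1 \<noteq> 0" "s2 \<noteq> 0"
    and dev2: "d2 \<bullet> cross3 e x2 = 0" and dev1: "d1 \<bullet> cross3 e x1 = 0"
    and deq: "d2 \<bullet> cross3 e x1 + x2 \<bullet> (cross3 e' x1 + cross3 e d1) = 0"
  shows "(c2 * s1 - s2 * c1) * (e \<bullet> cross3 e' w) = 0"
proof -
  have ce: "cross3 e (a *\<^sub>R e + b *\<^sub>R w) = b *\<^sub>R cross3 e w" for a b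
    by (simp add: cross3_simps)
  have i0: "d2 \<bullet> cross3 e w = 0" using dev2 s(2) unfolding x2 ce by simp
  have i: "d2 \<bullet> cross3 e x1 = 0" unfolding x1 ce using i0 by simp
  have j0: "d1 \<bullet> cross3 e w = 0" using dev1 s(1) unfolding x1 ce by simp
  have ii: "x2 \<bullet> cross3 e d1 = 0"
  proof -
    have "x2 \<bullet> cross3 e d1 = c2 * (e \<bullet> cross3 e d1) + s2 * (w \<bullet> cross3 e d1)"
      unfolding x2 by (simp add: inner_add_left)
    also have "w \<bullet> cross3 e d1 = - (d1 \<bullet> cross3 e w)"
      by (metis trip_rot trip_swap)
    finally show ?thesis using j0 by (simp add: trip_self)
  qed
  have iii: "x2 \<bullet> cross3 e' x1 = (c2 * s1 - s2 * c1) * (e \<bullet> cross3 e' w)"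
  proof -
    have "x2 \<bullet> cross3 e' x1 = c2 * s1 * (e \<bullet> cross3 e' w) + s2 * c1 * (w \<bullet> cross3 e' e)"
      unfolding x1 x2 by (simp add: cross3_simps)
    also have "w \<bullet> cross3 e' e = - (e \<bullet> cross3 e' w)" by (simp add: cross3_simps)
    finally show ?thesis by (simp add: algebra_simps)
  qed
  show ?thesis using deq i ii iii by (simp add: inner_add_right)
qed

lemma D_alg:
  fixes e n :: "real^3"
  assumes "e \<bullet> n = 0" "norm e = 1" "norm n = 1"
  shows "e \<bullet> cross3 (k *\<^sub>R n) (ca *\<^sub>R n + sa *\<^sub>R cross3 e n) = k * sa"
proof -
  have "cross3 (k *\<^sub>R n) (ca *\<^sub>R n + sa *\<^sub>R cross3 e n) = (k * sa) *\<^sub>R cross3 n (cross3 e n)"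
    by (simp add: cross3_simps)
  also have "cross3 n (cross3 e n) = (n \<bullet> n) *\<^sub>R e - (n \<bullet> e) *\<^sub>R n" by (rule vtp)
  finally have "cross3 (k *\<^sub>R n) (ca *\<^sub>R n + sa *\<^sub>R cross3 e n) = (k * sa) *\<^sub>R e"
    using assms by (simp add: inner_commute norm_eq_1)
  then show ?thesis using assms(2) by (simp add: norm_eq_1)
qed

lemma contra_alg:
  fixes e n :: "real^3" and A :: "real^3 \<Rightarrow> real^3"
  assumes "e \<bullet> n = 0" "norm e = 1" "norm n = 1" "linear A" "A n = n" "A (cross3 e n) = cross3 e n"
  shows "(cos bG *\<^sub>R (-e) + sin bG *\<^sub>R (cos aG *\<^sub>R n + sin aG *\<^sub>R (- cross3 e n)))
      \<bullet> A (cross3 e (cos bF *\<^sub>R e + sin bF *\<^sub>R (cos aF *\<^sub>R n + sin aF *\<^sub>R cross3 e n)))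
     = - (sin bF * sin bG * sin (aF + aG))"
proof -
  define b where "b = cross3 e n"
  have eb: "cross3 e b = - n" unfolding b_def vtp using assms(1,2) by (simp add: norm_eq_1)
  have "cross3 e (cos bF *\<^sub>R e + sin bF *\<^sub>R (cos aF *\<^sub>R n + sin aF *\<^sub>R b)) = sin bF *\<^sub>R (cos aF *\<^sub>R b - sin aF *\<^sub>R n)"
    using eb by (simp add: cross_add_right cross_mult_right b_def[symmetric] algebra_simps)
  then have hA: "A (cross3 e (cos bF *\<^sub>R e + sin bF *\<^sub>R (cos aF *\<^sub>R n + sin aF *\<^sub>R b))) = sin bF *\<^sub>R (cos aF *\<^sub>R b - sin aF *\<^sub>R n)"
    using assms(4,5,6) unfolding b_def by (simp add: linear_diff linear_cmul)
  have "e \<bullet> b = 0" "n \<bullet> b = 0" unfolding b_def by (simp_all add: cross3_simps)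
  moreover have "b \<bullet> b = 1"
  proof -
    have "(norm b)\<^sup>2 + (e \<bullet> n)\<^sup>2 = (norm e * norm n)\<^sup>2" unfolding b_def by (rule norm_cross_dot)
    then have "(norm b)\<^sup>2 = 1" using assms(1-3) by simp
    then have "norm b = 1" using norm_ge_zero[of b] by (metis abs_of_nonneg power2_eq_1_iff abs_neg_one  zero_le_one abs_one)
    then show ?thesis by (simp add: norm_eq_1)
  qed
  moreover have "n \<bullet> n = 1" using assms(3) by (simp add: norm_eq_1)
  ultimately show ?thesis unfolding b_def[symmetric] hA using assms(1)
    by (simp add: inner_add_left inner_add_right inner_diff_right inner_commute sin_add algebra_simps)
qed

lemma rev_deriv:
  assumes "(g has_vector_derivative d) (at (-t))"
  shows "((\<lambda>s. g (-s)) has_vector_derivative (- d)) (at t)"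
proof -
  have "((\<lambda>s. -s) has_vector_derivative (-1::real)) (at t)"
    by (auto intro!: derivative_eq_intros)
  from vector_diff_chain_at[OF this] assms show ?thesis by (simp add: o_def)
qed

lemma vd_works: "g differentiable (at s) \<Longrightarrow> (g has_vector_derivative vd g s) (at s)"
  unfolding vd_def using vector_derivative_works by blast

lemma open_neg: "open U \<Longrightarrow> open {t::real. -t \<in> U}"
proof -
  assume "open U"
  moreover have "{t::real. -t \<in> U} = (\<lambda>x. -x) ` U" by (force simp: image_iff)
  ultimately show ?thesis using open_negations by metis
qed

lemma vd_rev:
  assumes "g differentiable (at (-t))"
  shows "vd (\<lambda>s. g (-s)) t = - vd g (-t)"
  using rev_deriv[OF vd_works[OF assms]] vd_at by blast

lemma vd2_rev:
  assumes "open U" "-t \<in> U" "\<And>s. s \<in> U \<Longrightarrow> g differentiable (at s)"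
    "vd g differentiable (at (-t))"
  shows "vd (vd (\<lambda>s. g (-s))) t = vd (vd g) (-t)"
proof -
  have "vd (vd (\<lambda>s. g (-s))) t = vd (\<lambda>s. - vd g (-s)) t"
    by (rule vd_local[OF open_neg[OF assms(1)]]) (use assms(2) vd_rev assms(3) in auto)
  also have "\<dots> = vd (vd g) (-t)"
    using has_vector_derivative_minus[OF rev_deriv[OF vd_works[OF assms(4)]]] vd_at by fastforce
  finally show ?thesis .
qed

lemma vd_lin:
  fixes A :: "'a::euclidean_space \<Rightarrow> 'b::euclidean_space"
  assumes "open S" "s \<in> S" "\<And>t. t \<in> S \<Longrightarrow> h t = A (g t) + b" "linear A"
    "g differentiable (at s)"
  shows "vd h s = A (vd g s)"
proof -
  have bl: "bounded_linear A" using assms(4) linear_conv_bounded_linear by blast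
  have "vd h s = vd (\<lambda>t. A (g t) + b) s" by (rule vd_local[OF assms(1,2)]) (use assms(3) in auto)
  also have "\<dots> = A (vd g s)"
    using has_vector_derivative_add[OF bounded_linear.has_vector_derivative[OF bl vd_works[OF assms(5)]] has_vector_derivative_const[of b]]
    vd_at by fastforce
  finally show ?thesis .
qed

lemma unit_orth:
  fixes g :: "real \<Rightarrow> 'a::euclidean_space"
  assumes "open S" "s \<in> S" "\<And>t. t \<in> S \<Longrightarrow> norm (g t) = 1" "g differentiable (at s)"
  shows "g s \<bullet> vd g s = 0"
proof -
  have d1: "((\<lambda>t. g t \<bullet> g t) has_vector_derivative (g s \<bullet> vd g s + vd g s \<bullet> g s)) (at s)"
    using bounded_bilinear.has_vector_derivative[OF bounded_bilinear_inner vd_works[OF assms(4)] vd_works[OF assms(4)]]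
    by simp
  have "((\<lambda>t. (1::real)) has_vector_derivative 0) (at s)" by simp
  then have d2: "((\<lambda>t. g t \<bullet> g t) has_vector_derivative 0) (at s)"
    by (rule has_vector_derivative_transform_within_open[OF _ assms(1,2)])
       (use assms(3) in \<open>simp add: dot_square_norm\<close>)
  have "g s \<bullet> vd g s + vd g s \<bullet> g s = 0" using vector_derivative_unique_at[OF d1 d2] .
  then show ?thesis by (simp add: inner_commute)
qed

lemma cos_sgn_eq:
  fixes a b :: real
  assumes "\<bar>a\<bar> < pi/2" "\<bar>b\<bar> < pi/2" "cos a = cos b" "sgn a = sgn b"
  shows "a = b"
proof -
  have "cos \<bar>a\<bar> = cos \<bar>b\<bar>" using assms(3) by simp
  moreover have "\<bar>a\<bar> \<le> pi" "\<bar>b\<bar> \<le> pi" using assms(1,2) pi_gt_zero by linarith+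
  ultimately have "\<bar>a\<bar> = \<bar>b\<bar>" using cos_inj_pi[OF abs_ge_zero _ abs_ge_zero] by blast
  then show ?thesis using assms(4) by (metis sgn_mult_abs)
qed

lemma final_contra:
  fixes a b :: real
  assumes "0 < \<bar>a\<bar>" "\<bar>a\<bar> < pi/2" "\<bar>b\<bar> < pi/2" "sgn b = sgn a" "sin (a + b) = 0"
  shows False
proof -
  have "-pi < a + b" "a + b < pi" using assms(2,3) by linarith+
  then have "a + b = 0" using assms(5) sin_eq_0_pi by blast
  then have "b = -a" by simp
  then have "sgn a = 0" using assms(4) by (simp add: sgn_minus)
  then show False using assms(1) by (simp add: sgn_zero_iff)
qed

lemma sin_diff_zero:
  fixes a b :: real
  assumes "0 < a" "a < pi" "0 < b" "b < pi" "sin (a - b) = 0"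
  shows "a = b"
proof -
  have "-pi < a - b" "a - b < pi" using assms(1-4) by linarith+
  then have "a - b = 0" using assms(5) sin_eq_0_pi by blast
  then show ?thesis by simp
qed

locale ps =
  fixes c :: "real \<Rightarrow> real^3" and l :: real and U0 :: "real set"
    and \<alpha> \<alpha>G \<beta>F \<beta>G :: "real \<Rightarrow> real" and F G :: "real \<times> real \<Rightarrow> real^3" and dF dG :: real
  assumes lpos: "l > 0"
    and U0: "open U0" "param_int l \<subseteq> U0"
    and cd: "\<And>s. s \<in> U0 \<Longrightarrow> c differentiable (at s)"
    and vcd: "\<And>s. s \<in> U0 \<Longrightarrow> vd c differentiable (at s)"
    and unit: "\<forall>s\<in>param_int l. norm (vd c s) = 1"
    and inj: "inj_on c (param_int l)"
    and kap: "\<forall>s\<in>param_int l. curvature c s \<noteq> 0"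
    and np: "\<not> (\<exists>a d. a \<noteq> 0 \<and> (\<forall>s\<in>param_int l. a \<bullet> c s = d))"
    and dF: "dF > 0"
    and Fform: "\<And>s v. s \<in> param_int l \<Longrightarrow> \<bar>v\<bar> < dF \<Longrightarrow> F (s,v) = c s + v *\<^sub>R ruling c \<alpha> \<beta>F s"
    and Fb: "\<And>s. s \<in> param_int l \<Longrightarrow> 0 < \<bar>\<alpha> s\<bar> \<and> \<bar>\<alpha> s\<bar> < pi/2 \<and> 0 < \<beta>F s \<and> \<beta>F s < pi"
    and Fder: "\<And>s. s \<in> param_int l \<Longrightarrow> (ruling c \<alpha> \<beta>F has_vector_derivative vd (ruling c \<alpha> \<beta>F) s) (at s)"
    and Fdev: "\<And>s. s \<in> param_int l \<Longrightarrow> vd (ruling c \<alpha> \<beta>F) s \<bullet> cross3 (vd c s) (ruling c \<alpha> \<beta>F s) = 0"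
    and dG: "dG > 0"
    and Gform: "\<And>s v. s \<in> param_int l \<Longrightarrow> \<bar>v\<bar> < dG \<Longrightarrow> G (s,v) = c (-s) + v *\<^sub>R ruling (\<lambda>s. c (-s)) \<alpha>G \<beta>G s"
    and Gb: "\<And>s. s \<in> param_int l \<Longrightarrow> 0 < \<bar>\<alpha>G s\<bar> \<and> \<bar>\<alpha>G s\<bar> < pi/2 \<and> 0 < \<beta>G s \<and> \<beta>G s < pi"
    and Gder: "\<And>s. s \<in> param_int l \<Longrightarrow> (ruling (\<lambda>s. c (-s)) \<alpha>G \<beta>G has_vector_derivative vd (ruling (\<lambda>s. c (-s)) \<alpha>G \<beta>G) s) (at s)"
    and Gdev: "\<And>s. s \<in> param_int l \<Longrightarrow> vd (ruling (\<lambda>s. c (-s)) \<alpha>G \<beta>G) s \<bullet> cross3 (vd (\<lambda>s. c (-s)) s) (ruling (\<lambda>s. c (-s)) \<alpha>G \<beta>G s) = 0"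
    and sgnH: "\<forall>s\<in>param_int l. sgn (\<alpha>G s) = sgn (\<alpha> s) \<and> curvature c (-s) * cos (\<alpha>G s) = curvature c s * cos (\<alpha> s)"
begin

abbreviation "I \<equiv> param_int l"
abbreviation "J \<equiv> {-(l/2)<..<l/2}"
abbreviation "cr \<equiv> (\<lambda>s. c (-s))"
abbreviation "\<xi>F \<equiv> ruling c \<alpha> \<beta>F"
abbreviation "\<xi>G \<equiv> ruling (\<lambda>s. c (-s)) \<alpha>G \<beta>G"

lemma I_eq: "I = {-(l/2)..l/2}" by (simp add: param_int_def)
lemma symI: "s \<in> I \<Longrightarrow> -s \<in> I" by (auto simp: I_eq)
lemma zeroI: "0 \<in> I" using lpos by (simp add: I_eq)
lemma zeroJ: "0 \<in> J" using lpos by simp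
lemma JI: "J \<subseteq> I" by (auto simp: I_eq)
lemma closJ: "closure J = I" using lpos by (simp add: I_eq)
lemma compI: "compact I" by (simp add: I_eq)

lemma cder: "s \<in> U0 \<Longrightarrow> (c has_vector_derivative vd c s) (at s)"
  using vd_works cd by blast
lemma vcder: "s \<in> U0 \<Longrightarrow> (vd c has_vector_derivative vd (vd c) s) (at s)"
  using vd_works vcd by blast
lemma IU: "s \<in> I \<Longrightarrow> s \<in> U0" using U0(2) by blast
lemma JU: "s \<in> J \<Longrightarrow> s \<in> U0" using U0(2) JI by blast

lemma contc: "continuous_on I c"
  by (rule continuous_on_vector_derivative) (use cder IU has_vector_derivative_at_within in blast)

lemma vd_cr: "t \<in> I \<Longrightarrow> vd cr t = - vd c (-t)"
  using vd_rev cd IU symI by blast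

lemma cr_diff: "t \<in> I \<Longrightarrow> cr differentiable (at t)"
  using rev_deriv[OF cder] IU symI differentiableI_vector by blast

lemma vd2_cr: "t \<in> I \<Longrightarrow> vd (vd cr) t = vd (vd c) (-t)"
  using vd2_rev[OF U0(1) _ cd vcd] IU symI by blast

lemma curv_cr: "t \<in> I \<Longrightarrow> curvature cr t = curvature c (-t)"
  unfolding curvature_def using vd2_cr by simp

lemma fe_cr: "t \<in> I \<Longrightarrow> frenet_e cr t = - frenet_e c (-t)"
  unfolding frenet_e_def using vd_cr by simp
lemma fn_cr: "t \<in> I \<Longrightarrow> frenet_n cr t = frenet_n c (-t)"
  unfolding frenet_n_def using vd2_cr curv_cr by simp
lemma fb_cr: "t \<in> I \<Longrightarrow> frenet_b cr t = - frenet_b c (-t)"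
  unfolding frenet_b_def using fe_cr fn_cr by simp

lemma orthJ: "t \<in> J \<Longrightarrow> vd c t \<bullet> vd (vd c) t = 0"
  by (rule unit_orth[of J]) (use unit JI vcd JU in auto)

lemma nn: "t \<in> I \<Longrightarrow> norm (frenet_n c t) = 1"
  using kap unfolding frenet_n_def curvature_def by simp

lemma ee: "t \<in> I \<Longrightarrow> norm (frenet_e c t) = 1"
  using unit unfolding frenet_e_def by simp

lemma en: "t \<in> J \<Longrightarrow> frenet_e c t \<bullet> frenet_n c t = 0"
  using orthJ unfolding frenet_e_def frenet_n_def by simp

lemma fb_def': "frenet_b c t = cross3 (frenet_e c t) (frenet_n c t)"
  by (simp add: frenet_b_def)

lemma c2_eq: "t \<in> I \<Longrightarrow> vd (vd c) t = curvature c t *\<^sub>R frenet_n c t"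
proof -
  assume "t \<in> I"
  then have "norm (vd (vd c) t) \<noteq> 0" using kap unfolding curvature_def by blast
  then show ?thesis unfolding frenet_n_def curvature_def by simp
qed

lemma contF: "continuous_on I \<xi>F"
  by (rule continuous_on_vector_derivative) (use Fder has_vector_derivative_at_within in blast)
lemma contG: "continuous_on I \<xi>G"
  by (rule continuous_on_vector_derivative) (use Gder has_vector_derivative_at_within in blast)

lemma boundF: "\<exists>B. \<forall>s\<in>I. norm (\<xi>F s) \<le> B"
  using compact_imp_bounded[OF compact_continuous_image[OF contF compI]]
  unfolding bounded_iff by blast
lemma boundG: "\<exists>B. \<forall>s\<in>I. norm (\<xi>G s) \<le> B"
  using compact_imp_bounded[OF compact_continuous_image[OF contG compI]]
  unfolding bounded_iff by blast

lemma img_approx: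
  assumes "compact K" "\<And>e. e > 0 \<Longrightarrow> \<exists>y\<in>K. dist y x \<le> e"
  shows "x \<in> K"
proof -
  have "\<forall>e>0. \<exists>y\<in>K. dist y x < e"
  proof (intro allI impI)
    fix e :: real assume "e > 0"
    then obtain y where "y \<in> K" "dist y x \<le> e/2" using assms(2)[of "e/2"] by auto
    then show "\<exists>y\<in>K. dist y x < e" using \<open>e > 0\<close> by force
  qed
  then show ?thesis using closed_approachable[OF compact_imp_closed[OF assms(1)]] by blast
qed

end

context ps begin

lemma Om: "Omega l \<epsilon> = I \<times> {-\<epsilon><..<\<epsilon>}" by (simp add: Omega_def)

lemma memOm:
  assumes "x \<in> H ` Omega l \<epsilon>"
  obtains s v where "s \<in> I" "\<bar>v\<bar> < \<epsilon>" "x = H (s,v)"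
proof -
  obtain p where p: "p \<in> Omega l \<epsilon>" "x = H p" using assms by blast
  obtain s v where "p = (s,v)" by (cases p)
  then show ?thesis using p that[of s v] by (auto simp: Om abs_less_iff)
qed

lemma frames0:
  shows "\<xi>F 0 = cos (\<beta>F 0) *\<^sub>R vd c 0 + sin (\<beta>F 0) *\<^sub>R (cos (\<alpha> 0) *\<^sub>R frenet_n c 0 + sin (\<alpha> 0) *\<^sub>R cross3 (vd c 0) (frenet_n c 0))"
    and "\<xi>G 0 = cos (\<beta>G 0) *\<^sub>R (- vd c 0) + sin (\<beta>G 0) *\<^sub>R (cos (\<alpha>G 0) *\<^sub>R frenet_n c 0 + sin (\<alpha>G 0) *\<^sub>R (- cross3 (vd c 0) (frenet_n c 0)))"
  using fe_cr[OF zeroI] fn_cr[OF zeroI] fb_cr[OF zeroI]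
  by (simp_all add: ruling_def frenet_b_def frenet_e_def)

lemma dir1:
  assumes "congruent_small l F G"
  shows "\<exists>T. positive_symmetry T (c ` I)"
proof -
  obtain T \<epsilon>0 where H: "isometry3 T \<and> \<epsilon>0 > 0 \<and> (\<forall>\<epsilon>. 0 < \<epsilon> \<and> \<epsilon> < \<epsilon>0 \<longrightarrow> T ` (F ` Omega l \<epsilon>) = G ` Omega l \<epsilon>)"
    using assms unfolding congruent_small_def by (elim exE) iprover
  have iso: "isometry3 T" and e0: "\<epsilon>0 > 0" using H by simp_all
  have cong: "\<And>\<epsilon>. 0 < \<epsilon> \<Longrightarrow> \<epsilon> < \<epsilon>0 \<Longrightarrow> T ` (F ` Omega l \<epsilon>) = G ` Omega l \<epsilon>"
    using H by simp
  have isoT: "\<And>x y. dist (T x) (T y) = dist x y" using iso unfolding isometry3_def by simp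
  define A where "A = (\<lambda>x. T x - T 0)"
  have ot: "orthogonal_transformation A" unfolding A_def by (rule iso_orth[OF iso])
  have lA: "linear A" using ot by (simp add: orthogonal_transformation_def)
  have TA: "\<And>x. T x = A x + T 0" unfolding A_def by simp
  obtain BF where BF: "\<forall>s\<in>I. norm (\<xi>F s) \<le> BF" using boundF by blast
  obtain BG where BG: "\<forall>s\<in>I. norm (\<xi>G s) \<le> BG" using boundG by blast
  define m where "m = min \<epsilon>0 (min dF dG)"
  have m: "m > 0" using e0 dF dG by (simp add: m_def)
  have small: "\<And>\<epsilon>. \<epsilon> < m \<Longrightarrow> \<epsilon> < \<epsilon>0 \<and> \<epsilon> < dF \<and> \<epsilon> < dG" by (simp add: m_def)
  have epsch: "\<exists>\<epsilon>. 0 < \<epsilon> \<and> \<epsilon> < m \<and> \<epsilon> * B \<le> e" if "e > 0" "B \<ge> 0" for e B :: real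
  proof -
    define \<epsilon> where "\<epsilon> = min (m/2) (e / (B + 1))"
    have "\<epsilon> * B \<le> (e / (B + 1)) * B" using that m by (intro mult_right_mono) (auto simp: \<epsilon>_def)
    also have "\<dots> \<le> e" using that by (simp add: field_simps)
    finally show ?thesis using m that by (intro exI[of _ \<epsilon>]) (auto simp: \<epsilon>_def)
  qed
  have BF0: "BF \<ge> 0" using BF zeroI norm_ge_zero order_trans by blast
  have BG0: "BG \<ge> 0" using BG zeroI norm_ge_zero order_trans by blast
  have contT: "continuous_on UNIV T" by (rule iso_cont[OF isoT])
  have img: "T ` c ` I = c ` I"
  proof
    show "T ` c ` I \<subseteq> c ` I"
    proof
      fix x assume "x \<in> T ` c ` I"
      then obtain s where s: "s \<in> I" "x = T (c s)" by blast
      show "x \<in> c ` I"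
      proof (rule img_approx[OF compact_continuous_image[OF contc compI]])
        fix e :: real assume e: "e > 0"
        obtain \<epsilon> where \<epsilon>: "0 < \<epsilon>" "\<epsilon> < m" "\<epsilon> * BG \<le> e" using epsch[OF e BG0] by blast
        have "(s,0) \<in> Omega l \<epsilon>" using s(1) \<epsilon>(1) by (simp add: Om)
        moreover have "x = T (F (s,0))" using Fform[OF s(1)] dF s(2) by simp
        ultimately have "x \<in> T ` F ` Omega l \<epsilon>" by (metis image_eqI)
        then have "x \<in> G ` Omega l \<epsilon>" using cong[OF \<epsilon>(1)] small[OF \<epsilon>(2)] by simp
        then obtain s' v' where sv: "s' \<in> I" "\<bar>v'\<bar> < \<epsilon>" "x = G (s',v')" by (rule memOm)
        then have x: "x = c (-s') + v' *\<^sub>R \<xi>G s'" using Gform small \<epsilon>(2) by force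
        have "dist (c (-s')) x = \<bar>v'\<bar> * norm (\<xi>G s')" unfolding x by (simp add: dist_norm)
        also have "\<dots> \<le> \<epsilon> * BG" using sv BG by (intro mult_mono) auto
        finally show "\<exists>y\<in>c ` I. dist y x \<le> e" using \<epsilon>(3) symI[OF sv(1)] by force
      qed
    qed
    show "c ` I \<subseteq> T ` c ` I"
    proof
      fix x assume "x \<in> c ` I"
      then obtain t where t: "t \<in> I" "x = c t" by blast
      have cT: "continuous_on I (\<lambda>s. T (c s))"
        by (rule continuous_on_compose2[OF contT contc]) auto
      show "x \<in> T ` c ` I"
      proof (rule img_approx)
        show "compact (T ` c ` I)" using compact_continuous_image[OF cT compI] by (simp add: image_image)
        fix e :: real assume e: "e > 0"
        obtain \<epsilon> where \<epsilon>: "0 < \<epsilon>" "\<epsilon> < m" "\<epsilon> * BF \<le> e" using epsch[OF e BF0] by blast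
        have "(-t,0) \<in> Omega l \<epsilon>" using symI[OF t(1)] \<epsilon>(1) by (simp add: Om)
        moreover have "x = G (-t,0)" using Gform[OF symI[OF t(1)]] dG t(2) by simp
        ultimately have "x \<in> G ` Omega l \<epsilon>" by (metis image_eqI)
        then have "x \<in> T ` F ` Omega l \<epsilon>" using cong[OF \<epsilon>(1)] small[OF \<epsilon>(2)] by simp
        then have "x \<in> (\<lambda>p. T (F p)) ` Omega l \<epsilon>" by (simp add: image_image)
        then obtain s' v' where sv: "s' \<in> I" "\<bar>v'\<bar> < \<epsilon>" "x = T (F (s',v'))" by (rule memOm)
        then have x: "x = T (c s' + v' *\<^sub>R \<xi>F s')" using Fform small \<epsilon>(2) by force
        have "dist (T (c s')) x = \<bar>v'\<bar> * norm (\<xi>F s')" unfolding x isoT by (simp add: dist_norm)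
        also have "\<dots> \<le> \<epsilon> * BF" using sv BF by (intro mult_mono) auto
        finally show "\<exists>y\<in>T ` c ` I. dist y x \<le> e" using \<epsilon>(3) sv(1) by force
      qed
    qed
  qed
  have cdv: "\<And>s. s \<in> {-(l/2)..l/2} \<Longrightarrow> (c has_vector_derivative vd c s) (at s)"
    using cder IU I_eq by blast
  have arcr: "(\<forall>s\<in>I. T (c s) = c s) \<or> (\<forall>s\<in>I. T (c s) = c (-s))"
    using arc[of "l/2" c "vd c" T, OF _ cdv] lpos unit inj isoT img unfolding I_eq by auto
  have Tc0: "T (c 0) = c 0" using arcr zeroI by auto
  obtain k where k: "k > 0" "\<forall>s\<in>I. k * \<bar>s\<bar> \<le> norm (c s - c 0)"
    using lowerbound[OF compI zeroI contc inj cder[OF IU[OF zeroI]]] unit zeroI by auto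
  have tan: "\<xi>G 0 \<bullet> A (cross3 (vd c 0) (\<xi>F 0)) = 0"
  proof (rule tangent[OF ot TA zeroI _ _ dF dG e0 _ Tc0 cder[OF IU[OF zeroI]]])
    show "\<And>s v. s \<in> I \<Longrightarrow> \<bar>v\<bar> < dF \<Longrightarrow> F (s, v) = c s + v *\<^sub>R \<xi>F s" using Fform by blast
    show "\<And>v. \<bar>v\<bar> < dG \<Longrightarrow> G (0, v) = c 0 + v *\<^sub>R \<xi>G 0" using Gform[OF zeroI] by simp
    show "\<And>\<epsilon>. 0 < \<epsilon> \<Longrightarrow> \<epsilon> < \<epsilon>0 \<Longrightarrow> T ` F ` (I \<times> {- \<epsilon><..<\<epsilon>}) = G ` (I \<times> {- \<epsilon><..<\<epsilon>})"
      using cong by (simp add: Om)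
    show "continuous (at 0 within I) \<xi>F" using contF zeroI continuous_on_eq_continuous_within by blast
    show "\<And>s. s \<in> I \<Longrightarrow> norm (\<xi>F s) \<le> BF" using BF by blast
    show "k > 0" by (rule k(1))
    show "\<And>s. s \<in> I \<Longrightarrow> k * \<bar>s\<bar> \<le> norm (c s - c 0)" using k(2) by blast
  qed
  define e0v where "e0v = vd c 0"
  define n0 where "n0 = frenet_n c 0"
  have en0: "e0v \<bullet> n0 = 0" using en[OF zeroJ] by (simp add: e0v_def n0_def frenet_e_def)
  have ne0: "norm e0v = 1" using ee[OF zeroI] by (simp add: e0v_def frenet_e_def)
  have nn0: "norm n0 = 1" using nn[OF zeroI] by (simp add: n0_def)
  have gen: False if An: "A n0 = n0" and Ab: "A (cross3 e0v n0) = cross3 e0v n0"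
  proof -
    have "- (sin (\<beta>F 0) * sin (\<beta>G 0) * sin (\<alpha> 0 + \<alpha>G 0)) = 0"
      using tan contra_alg[OF en0 ne0 nn0 lA An Ab, of "\<beta>G 0" "\<alpha>G 0" "\<beta>F 0" "\<alpha> 0"]
      unfolding frames0 e0v_def[symmetric] n0_def[symmetric] by simp
    moreover have "sin (\<beta>F 0) > 0" "sin (\<beta>G 0) > 0" using Fb[OF zeroI] Gb[OF zeroI] by (simp_all add: sin_gt_zero)
    ultimately have "sin (\<alpha> 0 + \<alpha>G 0) = 0" by simp
    moreover have "0 < \<bar>\<alpha> 0\<bar>" "\<bar>\<alpha> 0\<bar> < pi/2" using Fb[OF zeroI] by simp_all
    moreover have "\<bar>\<alpha>G 0\<bar> < pi/2" using Gb[OF zeroI] by simp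
    moreover have "sgn (\<alpha>G 0) = sgn (\<alpha> 0)" using sgnH zeroI by simp
    ultimately show False using final_contra by blast
  qed
  from arcr show ?thesis
  proof
    assume fx: "\<forall>s\<in>I. T (c s) = c s"
    have "T = id" by (rule planar_id[OF np zeroI iso fx])
    then have Aid: "\<And>x. A x = x" unfolding A_def by simp
    have False using gen[OF Aid Aid] .
    then show ?thesis by blast
  next
    assume rv: "\<forall>s\<in>I. T (c s) = c (-s)"
    show ?thesis
    proof (cases "det (matrix A) > 0")
      case True
      have "T \<noteq> id"
      proof
        assume Tid: "T = id"
        have h1: "l/2 \<in> I" "-(l/2) \<in> I" using lpos by (simp_all add: I_eq)
        have "T (c (l/2)) = c (-(l/2))" using rv h1(1) by blast
        then have "c (l/2) = c (-(l/2))" using Tid by simp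
        then have "l/2 = -(l/2)" using inj_onD[OF inj _ h1] by blast
        then show False using lpos by simp
      qed
      then have "positive_symmetry T (c ` I)"
        unfolding positive_symmetry_def using iso True img by (simp add: A_def)
      then show ?thesis by blast
    next
      case False
      then have detm: "det (matrix A) = -1" using orthogonal_transformation_det[OF ot] by linarith
      have crJ: "cr t = A (c t) + T 0" if "t \<in> J" for t
      proof -
        have "t \<in> I" using that JI by blast
        then have "T (c t) = c (-t)" using rv by blast
        then show ?thesis using TA[of "c t"] by simp
      qed
      have vdcrJ: "vd cr t = A (vd c t) + 0" if "t \<in> J" for t
        using vd_lin[of J t cr A c "T 0"] crJ lA cd[OF JU[OF that]] that by simp
      have "vd (vd cr) 0 = A (vd (vd c) 0)"
        using vd_lin[OF _ zeroJ vdcrJ lA] vcd JU zeroJ by simp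
      then have Ac2: "A (vd (vd c) 0) = vd (vd c) 0" using vd2_cr[OF zeroI] by simp
      have An: "A n0 = n0" unfolding n0_def frenet_n_def using Ac2 linear_cmul[OF lA] by simp
      have Ae: "A e0v = - e0v" using vdcrJ[OF zeroJ] vd_cr[OF zeroI] by (simp add: e0v_def)
      have "cross3 (A e0v) (A n0) = det (matrix A) *\<^sub>R A (cross3 e0v n0)"
        by (rule cross_orthogonal_transformation[OF ot])
      then have "A (cross3 e0v n0) = cross3 e0v n0" unfolding Ae An detm by simp
      then show ?thesis using gen An by blast
    qed
  qed
qed

end

context ps begin

lemma dir2:
  assumes "\<exists>T. positive_symmetry T (c ` I)"
  shows "congruent_small l F G"
proof -
  obtain T where psT: "positive_symmetry T (c ` I)" using assms by (elim exE)
  have H: "isometry3 T \<and> det (matrix (\<lambda>x. T x - T 0)) > 0 \<and> T \<noteq> id \<and> T ` (c ` I) = c ` I"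
    using psT unfolding positive_symmetry_def .
  have iso: "isometry3 T" using H by simp
  have Tn: "T \<noteq> id" using H by simp
  have img: "T ` c ` I = c ` I" using H by simp
  have isoT: "\<And>x y. dist (T x) (T y) = dist x y" using iso unfolding isometry3_def by simp
  define A where "A = (\<lambda>x. T x - T 0)"
  have detp: "det (matrix A) > 0" using H unfolding A_def by simp
  have ot: "orthogonal_transformation A" unfolding A_def by (rule iso_orth[OF iso])
  have lA: "linear A" using ot by (simp add: orthogonal_transformation_def)
  have blA: "bounded_linear A" using lA linear_conv_bounded_linear by blast
  have TA: "\<And>x. T x = A x + T 0" unfolding A_def by simp
  have det1: "det (matrix A) = 1" using orthogonal_transformation_det[OF ot] detp by linarith
  have crossA: "\<And>x y. cross3 (A x) (A y) = A (cross3 x y)"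
    using cross_orthogonal_transformation[OF ot] det1 by simp
  have innA: "\<And>x y. A x \<bullet> A y = x \<bullet> y" using ot by (simp add: orthogonal_transformation_def)
  have normA: "\<And>x. norm (A x) = norm x" using orthogonal_transformation_norm[OF ot] by simp
  have cdv: "\<And>s. s \<in> {-(l/2)..l/2} \<Longrightarrow> (c has_vector_derivative vd c s) (at s)"
    using cder IU I_eq by blast
  have arcr: "(\<forall>s\<in>I. T (c s) = c s) \<or> (\<forall>s\<in>I. T (c s) = c (-s))"
    using arc[of "l/2" c "vd c" T, OF _ cdv] lpos unit inj isoT img unfolding I_eq by auto
  have rv: "\<forall>s\<in>I. T (c s) = c (-s)"
  proof (rule ccontr)
    assume "\<not> (\<forall>s\<in>I. T (c s) = c (-s))"
    then have fx: "\<forall>s\<in>I. T (c s) = c s" using arcr by blast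
    have "T = id" by (rule planar_id[OF np zeroI iso fx])
    then show False using Tn by contradiction
  qed
  have crJ: "cr t = A (c t) + T 0" if "t \<in> J" for t
  proof -
    have "t \<in> I" using that JI by blast
    then have "T (c t) = c (-t)" using rv by blast
    then show ?thesis using TA[of "c t"] by simp
  qed
  have vdcrJ: "vd cr t = A (vd c t) + 0" if "t \<in> J" for t
    using vd_lin[of J t cr A c "T 0"] crJ lA cd[OF JU[OF that]] that by simp
  have vd2crJ: "vd (vd cr) t = A (vd (vd c) t)" if "t \<in> J" for t
    using vd_lin[of J t "vd cr" A "vd c" 0] vdcrJ lA vcd[OF JU[OF that]] that by simp
  have curvJ: "curvature cr t = curvature c t" if "t \<in> J" for t
    unfolding curvature_def using vd2crJ[OF that] normA by simp
  have feJ: "frenet_e cr t = A (frenet_e c t)" if "t \<in> J" for t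
    unfolding frenet_e_def using vdcrJ[OF that] by simp
  have fnJ: "frenet_n cr t = A (frenet_n c t)" if "t \<in> J" for t
    unfolding frenet_n_def using vd2crJ[OF that] curvJ[OF that] linear_cmul[OF lA] by simp
  have fbJ: "frenet_b cr t = A (frenet_b c t)" if "t \<in> J" for t
    unfolding frenet_b_def using feJ[OF that] fnJ[OF that] crossA by simp
  have aeq: "\<alpha>G t = \<alpha> t" if "t \<in> J" for t
  proof -
    have tI: "t \<in> I" using that JI by blast
    have k1: "curvature c (-t) = curvature c t" using curv_cr[OF tI] curvJ[OF that] by simp
    have k2: "curvature c t \<noteq> 0" using kap tI by blast
    have "curvature c (-t) * cos (\<alpha>G t) = curvature c t * cos (\<alpha> t)" using sgnH tI by blast
    then have "curvature c t * cos (\<alpha>G t) = curvature c t * cos (\<alpha> t)" unfolding k1 .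
    then have "cos (\<alpha>G t) = cos (\<alpha> t)" using k2 by simp
    moreover have "sgn (\<alpha>G t) = sgn (\<alpha> t)" using sgnH tI by simp
    moreover have "\<bar>\<alpha>G t\<bar> < pi/2" "\<bar>\<alpha> t\<bar> < pi/2" using Fb[OF tI] Gb[OF tI] by simp_all
    ultimately show ?thesis using cos_sgn_eq by blast
  qed
  define W where "W t = cos (\<alpha> t) *\<^sub>R frenet_n cr t + sin (\<alpha> t) *\<^sub>R frenet_b cr t" for t
  have x1J: "A (\<xi>F t) = cos (\<beta>F t) *\<^sub>R vd cr t + sin (\<beta>F t) *\<^sub>R W t" if "t \<in> J" for t
  proof -
    have "A (\<xi>F t) = cos (\<beta>F t) *\<^sub>R A (frenet_e c t) + sin (\<beta>F t) *\<^sub>R (cos (\<alpha> t) *\<^sub>R A (frenet_n c t) + sin (\<alpha> t) *\<^sub>R A (frenet_b c t))"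
      unfolding ruling_def using lA by (simp add: linear_add linear_cmul)
    then show ?thesis unfolding W_def using feJ[OF that] fnJ[OF that] fbJ[OF that] by (simp add: frenet_e_def)
  qed
  have x2J: "\<xi>G t = cos (\<beta>G t) *\<^sub>R vd cr t + sin (\<beta>G t) *\<^sub>R W t" if "t \<in> J" for t
    unfolding W_def ruling_def using aeq[OF that] by (simp add: frenet_e_def)
  have bb: "bounded_bilinear cross3" using bilinear_conv_bounded_bilinear bilinear_cross by blast
  have eqJ: "A (\<xi>F s) = \<xi>G s" if sJ: "s \<in> J" for s
  proof -
    have sI: "s \<in> I" using sJ JI by blast
    define f where "f t = \<xi>G t \<bullet> cross3 (vd cr t) (A (\<xi>F t))" for t
    have f0: "f t = 0" if "t \<in> J" for t
      unfolding f_def x1J[OF that] x2J[OF that] by (rule copl)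
    have dG': "(\<xi>G has_vector_derivative vd \<xi>G s) (at s)" using Gder[OF sI] .
    have dE: "(vd cr has_vector_derivative A (vd (vd c) s)) (at s)"
    proof -
      have "((\<lambda>t. A (vd c t)) has_vector_derivative A (vd (vd c) s)) (at s)"
        using bounded_linear.has_vector_derivative[OF blA vcder[OF JU[OF sJ]]] .
      then show ?thesis
        by (rule has_vector_derivative_transform_within_open[of _ _ s J]) (use sJ vdcrJ in auto)
    qed
    have dF': "((\<lambda>t. A (\<xi>F t)) has_vector_derivative A (vd \<xi>F s)) (at s)"
      using bounded_linear.has_vector_derivative[OF blA Fder[OF sI]] .
    have dK: "((\<lambda>t. cross3 (vd cr t) (A (\<xi>F t))) has_vector_derivative
        (cross3 (vd cr s) (A (vd \<xi>F s)) + cross3 (A (vd (vd c) s)) (A (\<xi>F s)))) (at s)"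
      using bounded_bilinear.has_vector_derivative[OF bb dE dF'] .
    have df: "(f has_vector_derivative
        (\<xi>G s \<bullet> (cross3 (vd cr s) (A (vd \<xi>F s)) + cross3 (A (vd (vd c) s)) (A (\<xi>F s)))
          + vd \<xi>G s \<bullet> cross3 (vd cr s) (A (\<xi>F s)))) (at s)"
      unfolding f_def using bounded_bilinear.has_vector_derivative[OF bounded_bilinear_inner dG' dK] .
    have "((\<lambda>t. 0::real) has_vector_derivative 0) (at s)" by simp
    then have df0: "(f has_vector_derivative 0) (at s)"
      by (rule has_vector_derivative_transform_within_open[of _ _ s J]) (use sJ f0 in auto)
    have deq0: "\<xi>G s \<bullet> (cross3 (vd cr s) (A (vd \<xi>F s)) + cross3 (A (vd (vd c) s)) (A (\<xi>F s)))
          + vd \<xi>G s \<bullet> cross3 (vd cr s) (A (\<xi>F s)) = 0"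
      using vector_derivative_unique_at[OF df df0] .
    have deq: "vd \<xi>G s \<bullet> cross3 (vd cr s) (A (\<xi>F s)) + \<xi>G s \<bullet> (cross3 (A (vd (vd c) s)) (A (\<xi>F s)) + cross3 (vd cr s) (A (vd \<xi>F s))) = 0"
      using deq0 by (simp add: add.commute)
    have dev1: "A (vd \<xi>F s) \<bullet> cross3 (vd cr s) (A (\<xi>F s)) = 0"
      using Fdev[OF sI] unfolding vdcrJ[OF sJ] by (simp add: crossA innA)
    have sF: "sin (\<beta>F s) \<noteq> 0" "sin (\<beta>G s) \<noteq> 0" using Fb[OF sI] Gb[OF sI] sin_gt_zero by force+
    have K: "(cos (\<beta>G s) * sin (\<beta>F s) - sin (\<beta>G s) * cos (\<beta>F s)) * (vd cr s \<bullet> cross3 (A (vd (vd c) s)) (W s)) = 0"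
      by (rule key_alg[OF x2J[OF sJ] x1J[OF sJ] sF(1) sF(2) Gdev[OF sI] dev1 deq])
    have D: "vd cr s \<bullet> cross3 (A (vd (vd c) s)) (W s) = curvature c s * sin (\<alpha> s)"
    proof -
      have "A (vd (vd c) s) = curvature c s *\<^sub>R frenet_n cr s"
        using c2_eq[OF sI] fnJ[OF sJ] linear_cmul[OF lA] by simp
      moreover have "W s = cos (\<alpha> s) *\<^sub>R frenet_n cr s + sin (\<alpha> s) *\<^sub>R cross3 (vd cr s) (frenet_n cr s)"
        unfolding W_def frenet_b_def frenet_e_def ..
      moreover have "vd cr s \<bullet> frenet_n cr s = 0"
        using en[OF sJ] vdcrJ[OF sJ] fnJ[OF sJ] innA by (simp add: frenet_e_def)
      moreover have "norm (vd cr s) = 1" using vdcrJ[OF sJ] normA unit sI by simp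
      moreover have "norm (frenet_n cr s) = 1" using fnJ[OF sJ] normA nn[OF sI] by simp
      ultimately show ?thesis using D_alg by simp
    qed
    have "curvature c s \<noteq> 0" using kap sI by blast
    moreover have "sin (\<alpha> s) \<noteq> 0"
    proof
      assume "sin (\<alpha> s) = 0"
      moreover have "-pi < \<alpha> s" "\<alpha> s < pi" using Fb[OF sI] by linarith+
      ultimately have "\<alpha> s = 0" using sin_eq_0_pi by blast
      then show False using Fb[OF sI] by simp
    qed
    ultimately have "cos (\<beta>G s) * sin (\<beta>F s) - sin (\<beta>G s) * cos (\<beta>F s) = 0" using K D by simp
    then have "sin (\<beta>F s - \<beta>G s) = 0" by (simp add: sin_diff algebra_simps)
    then have "\<beta>F s = \<beta>G s" using sin_diff_zero Fb[OF sI] Gb[OF sI] by blast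
    then show ?thesis using x1J[OF sJ] x2J[OF sJ] by simp
  qed
  have eqI: "A (\<xi>F s) = \<xi>G s" if sI: "s \<in> I" for s
  proof -
    have cA: "continuous_on I (\<lambda>s. A (\<xi>F s))"
      by (rule continuous_on_compose2[OF linear_continuous_on[OF blA] contF]) auto
    have "continuous_on (closure J) (\<lambda>s. A (\<xi>F s) - \<xi>G s)"
      unfolding closJ by (intro continuous_on_diff cA contG)
    then have "A (\<xi>F s) - \<xi>G s = 0"
      by (rule continuous_constant_on_closure) (use eqJ closJ sI in auto)
    then show ?thesis by simp
  qed
  define m where "m = min dF dG"
  have m: "m > 0" using dF dG by (simp add: m_def)
  have TFG: "T (F p) = G p" if p: "p \<in> Omega l \<epsilon>" "\<epsilon> < m" for p \<epsilon>
  proof -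
    obtain s v where sv3: "p = (s,v)" by (cases p)
    then have sv: "s \<in> I" "\<bar>v\<bar> < \<epsilon>" "p = (s,v)" using p(1) by (auto simp: Om abs_less_iff)
    have v1: "\<bar>v\<bar> < dF" "\<bar>v\<bar> < dG" using sv(2) p(2) by (auto simp: m_def)
    have "T (F p) = T (c s + v *\<^sub>R \<xi>F s)" using Fform[OF sv(1) v1(1)] sv(3) by simp
    also have "\<dots> = A (c s + v *\<^sub>R \<xi>F s) + T 0" by (rule TA)
    also have "\<dots> = (A (c s) + T 0) + v *\<^sub>R A (\<xi>F s)" using lA by (simp add: linear_add linear_cmul)
    finally have X: "T (F p) = (A (c s) + T 0) + v *\<^sub>R A (\<xi>F s)" .
    have h1: "A (c s) + T 0 = c (-s)" using TA[of "c s"] rv sv(1) by simp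
    show ?thesis unfolding X h1 eqI[OF sv(1)] using Gform[OF sv(1) v1(2)] sv(3) by simp
  qed
  have "T ` (F ` Omega l \<epsilon>) = G ` Omega l \<epsilon>" if "0 < \<epsilon>" "\<epsilon> < m" for \<epsilon>
  proof -
    have "T ` (F ` Omega l \<epsilon>) = (\<lambda>p. T (F p)) ` Omega l \<epsilon>" by (simp add: image_image)
    also have "\<dots> = G ` Omega l \<epsilon>" by (rule image_cong) (use TFG that in auto)
    finally show ?thesis .
  qed
  then show ?thesis unfolding congruent_small_def using iso m by blast
qed

end

theorem proposition4p6:
  fixes c :: "real \<Rightarrow> real^3" and l :: real
    and F :: "real \<times> real \<Rightarrow> real^3" and \<alpha> :: "real \<Rightarrow> real"
  assumes "l > 0"
    and "\<exists>U. open U \<and> param_int l \<subseteq> U \<and> smooth_curve_on U c"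
    and "\<forall>s\<in>param_int l. norm (vd c s) = 1"
    and "inj_on c (param_int l)"
    and "\<forall>s\<in>param_int l. curvature c s \<noteq> 0"
    and "\<not> (\<exists>a d. a \<noteq> 0 \<and> (\<forall>s\<in>param_int l. a \<bullet> c s = d))"
    and "normal_form c l \<alpha> F" and "admissible c l \<alpha>"
  shows "\<forall>G \<alpha>G. normal_form (\<lambda>s. c (-s)) l \<alpha>G G \<and> admissible (\<lambda>s. c (-s)) l \<alpha>G
            \<and> (\<forall>s\<in>param_int l. sgn (\<alpha>G s) = sgn (\<alpha> s)
                   \<and> curvature c (-s) * cos (\<alpha>G s) = curvature c s * cos (\<alpha> s))
          \<longrightarrow> (congruent_small l F G \<longleftrightarrow> (\<exists>T. positive_symmetry T (c ` param_int l)))"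
proof (intro allI impI)
  fix G \<alpha>G
  assume HG: "normal_form (\<lambda>s. c (-s)) l \<alpha>G G \<and> admissible (\<lambda>s. c (-s)) l \<alpha>G
            \<and> (\<forall>s\<in>param_int l. sgn (\<alpha>G s) = sgn (\<alpha> s)
                   \<and> curvature c (-s) * cos (\<alpha>G s) = curvature c s * cos (\<alpha> s))"
  have nfG: "normal_form (\<lambda>s. c (-s)) l \<alpha>G G" using HG by simp
  have sgnH: "\<forall>s\<in>param_int l. sgn (\<alpha>G s) = sgn (\<alpha> s)
                   \<and> curvature c (-s) * cos (\<alpha>G s) = curvature c s * cos (\<alpha> s)" using HG by simp
  obtain U0 where U0: "open U0" "param_int l \<subseteq> U0" "smooth_curve_on U0 c" using assms(2) by blast
  have "\<forall>s\<in>U0. ((vd ^^ 0) c) differentiable (at s)" using U0(3) unfolding smooth_curve_on_def by blast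
  then have cd: "\<And>s. s \<in> U0 \<Longrightarrow> c differentiable (at s)" by simp
  have "\<forall>s\<in>U0. ((vd ^^ 1) c) differentiable (at s)" using U0(3) unfolding smooth_curve_on_def by blast
  then have vcd: "\<And>s. s \<in> U0 \<Longrightarrow> vd c differentiable (at s)" by simp
  have cdI: "\<And>s. s \<in> param_int l \<Longrightarrow> c differentiable (at s)" using cd U0(2) by blast
  have crdI: "(\<lambda>s. c (-s)) differentiable (at s)" if "s \<in> param_int l" for s
  proof -
    have "-s \<in> U0" using that U0(2) by (auto simp: param_int_def)
    then show ?thesis using rev_deriv[OF vd_works[OF cd]] differentiableI_vector by blast
  qed
  obtain \<beta>F dF where F1: "dF > 0"
    and F2: "\<And>s v. s \<in> param_int l \<Longrightarrow> \<bar>v\<bar> < dF \<Longrightarrow> F (s,v) = c s + v *\<^sub>R ruling c \<alpha> \<beta>F s"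
    and F3: "\<And>s. s \<in> param_int l \<Longrightarrow> 0 < \<bar>\<alpha> s\<bar> \<and> \<bar>\<alpha> s\<bar> < pi/2 \<and> 0 < \<beta>F s \<and> \<beta>F s < pi"
    and F4: "\<And>s. s \<in> param_int l \<Longrightarrow> (ruling c \<alpha> \<beta>F has_vector_derivative vd (ruling c \<alpha> \<beta>F) s) (at s)"
    and F5: "\<And>s. s \<in> param_int l \<Longrightarrow> vd (ruling c \<alpha> \<beta>F) s \<bullet> cross3 (vd c s) (ruling c \<alpha> \<beta>F s) = 0"
    by (rule nf_facts[OF assms(7) cdI]) (assumption | rule that)+
  obtain \<beta>G dG where G1: "dG > 0"
    and G2: "\<And>s v. s \<in> param_int l \<Longrightarrow> \<bar>v\<bar> < dG \<Longrightarrow> G (s,v) = c (-s) + v *\<^sub>R ruling (\<lambda>s. c (-s)) \<alpha>G \<beta>G s"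
    and G3: "\<And>s. s \<in> param_int l \<Longrightarrow> 0 < \<bar>\<alpha>G s\<bar> \<and> \<bar>\<alpha>G s\<bar> < pi/2 \<and> 0 < \<beta>G s \<and> \<beta>G s < pi"
    and G4: "\<And>s. s \<in> param_int l \<Longrightarrow> (ruling (\<lambda>s. c (-s)) \<alpha>G \<beta>G has_vector_derivative vd (ruling (\<lambda>s. c (-s)) \<alpha>G \<beta>G) s) (at s)"
    and G5: "\<And>s. s \<in> param_int l \<Longrightarrow> vd (ruling (\<lambda>s. c (-s)) \<alpha>G \<beta>G) s \<bullet> cross3 (vd (\<lambda>s. c (-s)) s) (ruling (\<lambda>s. c (-s)) \<alpha>G \<beta>G s) = 0"
    by (rule nf_facts[OF nfG crdI]) (assumption | rule that)+
  interpret P: ps c l U0 \<alpha> \<alpha>G \<beta>F \<beta>G F G dF dG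
    by (rule ps.intro) (use assms(1,3,4,5,6) U0 cd vcd F1 F2 F3 F4 F5 G1 G2 G3 G4 G5 sgnH in auto)
  show "congruent_small l F G \<longleftrightarrow> (\<exists>T. positive_symmetry T (c ` param_int l))"
    using P.dir1 P.dir2 by blast
qed

end
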